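(* Let $X$ be a compact Hausdorff space, $\alpha\colon X\to X$ continuous, $\delta f=f\circ\alpha$ on $C(X)$, and $A\colon C(X)\to C(X)$ a transfer operator for $(X,\alpha)$. Then for every $\mu\in M(X)$ and every $\varepsilon>0$ there exist a neighborhood $O(\mu)$ of $\mu$ in the weak$^*$ topology, a number $C(\varepsilon,\mu)$, and a sequence of functions $\chi_n\in C(X)$ with $\chi_n\ge$ the indicator function of $X_n(O(\mu))$ for all $n$, such that for all $n\in\mathbb N$ \[ \|A^n\chi_n\|\le C(\varepsilon,\mu)\,e^{n(\tau(\mu)+\varepsilon)}, \] where, if $\tau(\mu)=-\infty$, the number $\tau(\mu)+\varepsilon$ is replaced by $-1/\varepsilon$.
   Context: $C(X)$ is the space of real continuous functions with the supremum norm; $\mathbf 1$ is the constant function $1$. A transfer operator for $(X,\alpha)$ is a positive linear operator $A\colon C(X)\to C(X)$ with $A((f\circ\alpha)g)=f\,Ag$ for all $f,g\in C(X)$. $M(X)$ is the set of Borel probability measures on $X$ (regular, identified with positive normalized functionals on $C(X)$), with the weak$^*$ topology; $M_\delta$ denotes the $\alpha$-invariant ones ($\mu[f\circ\alpha]=\mu[f]$ for all $f$). For $x\in X$ the empirical measure is $\delta_{x,n}(f)=\frac1n\sum_{i=0}^{n-1}f(\alpha^i(x))$, and $X_n(O(\mu))=\{x\in X:\delta_{x,n}\in O(\mu)\}$. The $t$-entropy: a partition of unity is a finite set $D$ of nonnegative functions in $C(X)$ summing to $\mathbf 1$; for $\mu\in M_\delta$, $\tau_n(\mu,D)=\sup_{m\in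 M(X)}\sum_{g\in D}\mu[g]\ln\frac{m[A^ng]}{\mu[g]}$ (summands with $\mu[g]=0$ are $0$, $\ln0=-\infty$), $\tau(\mu)=\inf_{n\in\mathbb N}\frac1n\inf_D\tau_n(\mu,D)$, with $\tau(\mu)=-\infty$ if some $g\in D$ has $A^ng=0$ and $\mu[g]>0$; for $\mu\in M(X)\setminus M_\delta$ one sets $\tau(\mu)=-\infty$. *)

theory Defs
  imports "HOL-Analysis.Analysis"
begin

text \<open>The space X is a type of class t2_space with compact UNIV.
  C(X) = real continuous functions; measures in M(X) are represented as
  positive normalized linear functionals on C(X).\<close>

definition CX :: "('a::topological_space \<Rightarrow> real) set" where
  "CX = {f. continuous_on UNIV f}"

definition supnorm :: "('a \<Rightarrow> real) \<Rightarrow> real" where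
  "supnorm f = (SUP x. \<bar>f x\<bar>)"

definition transfer_operator ::
  "('a::topological_space \<Rightarrow> 'a) \<Rightarrow> (('a \<Rightarrow> real) \<Rightarrow> ('a \<Rightarrow> real)) \<Rightarrow> bool" where
  "transfer_operator \<alpha> A \<longleftrightarrow>
     (\<forall>f\<in>CX. A f \<in> CX) \<and>
     (\<forall>f\<in>CX. \<forall>g\<in>CX. A (\<lambda>x. f x + g x) = (\<lambda>x. A f x + A g x)) \<and>
     (\<forall>f\<in>CX. \<forall>c::real. A (\<lambda>x. c * f x) = (\<lambda>x. c * A f x)) \<and>
     (\<forall>f\<in>CX. (\<forall>x. 0 \<le> f x) \<longrightarrow> (\<forall>x. 0 \<le> A f x)) \<and>
     (\<forall>f\<in>CX. \<forall>g\<in>CX. A (\<lambda>x. f (\<alpha> x) * g x) = (\<lambda>x. f x * A g x))"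

definition prob_functional :: "(('a::topological_space \<Rightarrow> real) \<Rightarrow> real) \<Rightarrow> bool" where
  "prob_functional \<mu> \<longleftrightarrow>
     (\<forall>f\<in>CX. \<forall>g\<in>CX. \<mu> (\<lambda>x. f x + g x) = \<mu> f + \<mu> g) \<and>
     (\<forall>f\<in>CX. \<forall>c::real. \<mu> (\<lambda>x. c * f x) = c * \<mu> f) \<and>
     (\<forall>f\<in>CX. (\<forall>x. 0 \<le> f x) \<longrightarrow> 0 \<le> \<mu> f) \<and>
     \<mu> (\<lambda>x. 1) = 1"

definition MX :: "(('a::topological_space \<Rightarrow> real) \<Rightarrow> real) set" where
  "MX = {\<mu>. prob_functional \<mu>}"

definition invariant_functional ::
  "('a::topological_space \<Rightarrow> 'a) \<Rightarrow> (('a \<Rightarrow> real) \<Rightarrow> real) \<Rightarrow> bool" where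
  "invariant_functional \<alpha> \<mu> \<longleftrightarrow> \<mu> \<in> MX \<and> (\<forall>f\<in>CX. \<mu> (\<lambda>x. f (\<alpha> x)) = \<mu> f)"

definition weak_star_nhd ::
  "(('a::topological_space \<Rightarrow> real) \<Rightarrow> real) \<Rightarrow> ((('a \<Rightarrow> real) \<Rightarrow> real) set) \<Rightarrow> bool" where
  "weak_star_nhd \<mu> U \<longleftrightarrow>
     (\<exists>F e. finite F \<and> F \<subseteq> CX \<and> e > 0 \<and>
        {\<nu>\<in>MX. \<forall>f\<in>F. \<bar>\<nu> f - \<mu> f\<bar> < e} \<subseteq> U)"

definition empirical :: "('a \<Rightarrow> 'a) \<Rightarrow> 'a \<Rightarrow> nat \<Rightarrow> (('a \<Rightarrow> real) \<Rightarrow> real)" where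
  "empirical \<alpha> x n = (\<lambda>f. (\<Sum>i<n. f ((\<alpha> ^^ i) x)) / real n)"

definition Xn :: "('a \<Rightarrow> 'a) \<Rightarrow> nat \<Rightarrow> ((('a \<Rightarrow> real) \<Rightarrow> real) set) \<Rightarrow> 'a set" where
  "Xn \<alpha> n U = {x. empirical \<alpha> x n \<in> U}"

definition partition_of_unity :: "('a::topological_space \<Rightarrow> real) set \<Rightarrow> bool" where
  "partition_of_unity D \<longleftrightarrow> finite D \<and> D \<subseteq> CX \<and> (\<forall>g\<in>D. \<forall>x. 0 \<le> g x) \<and>
     (\<forall>x. (\<Sum>g\<in>D. g x) = 1)"

definition tau_summand :: "real \<Rightarrow> real \<Rightarrow> ereal" where
  "tau_summand a b = (if a = 0 then 0 else if b = 0 then -\<infinity> else ereal (a * ln (b / a)))"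

definition tau_n ::
  "(('a::topological_space \<Rightarrow> real) \<Rightarrow> ('a \<Rightarrow> real)) \<Rightarrow> (('a \<Rightarrow> real) \<Rightarrow> real) \<Rightarrow> nat
     \<Rightarrow> ('a \<Rightarrow> real) set \<Rightarrow> ereal" where
  "tau_n A \<mu> n D = (SUP m\<in>MX. \<Sum>g\<in>D. tau_summand (\<mu> g) (m ((A ^^ n) g)))"

definition t_entropy ::
  "('a::topological_space \<Rightarrow> 'a) \<Rightarrow> (('a \<Rightarrow> real) \<Rightarrow> ('a \<Rightarrow> real)) \<Rightarrow> (('a \<Rightarrow> real) \<Rightarrow> real) \<Rightarrow> ereal" where
  "t_entropy \<alpha> A \<mu> =
     (if invariant_functional \<alpha> \<mu>
      then (INF n\<in>{1..}. INF D\<in>{D. partition_of_unity D}. tau_n A \<mu> n D / ereal (real n))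
      else -\<infinity>)"

end

theory Submission
  imports Defs
begin


lemma ln_lower: fixes u::real assumes "-(1/2) \<le> u" shows "u - 2*u^2 \<le> ln (1+u)"
proof (cases "u \<le> 0")
  case True
  then show ?thesis using abs_ln_one_plus_x_minus_x_bound_nonpos[OF assms True] by (simp add: abs_if split: if_splits)
next
  case False
  show ?thesis
  proof (cases "u \<le> 1")
    case True
    then have "u - u^2 \<le> ln (1+u)" using False by (intro ln_one_plus_pos_lower_bound) auto
    moreover have "0 \<le> u^2" by simp
    ultimately show ?thesis by linarith
  next
    case f2: False
    have "u * 1 \<le> u * u" using f2 by (intro mult_left_mono) auto
    moreover have "0 \<le> u*u" by simp
    ultimately have "u - 2*u^2 \<le> 0" unfolding power2_eq_square by linarith
    moreover have "0 \<le> ln (1+u)" using f2 by simp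
    ultimately show ?thesis by simp
  qed
qed

lemma cx_const[simp]: "(\<lambda>x. c) \<in> CX" unfolding CX_def mem_Collect_eq by (auto intro!: continuous_intros)
lemma cx_add: "f \<in> CX \<Longrightarrow> g \<in> CX \<Longrightarrow> (\<lambda>x. f x + g x) \<in> CX" unfolding CX_def mem_Collect_eq by (auto intro!: continuous_intros)
lemma cx_diff: "f \<in> CX \<Longrightarrow> g \<in> CX \<Longrightarrow> (\<lambda>x. f x - g x) \<in> CX" unfolding CX_def mem_Collect_eq by (auto intro!: continuous_intros)
lemma cx_mult: "f \<in> CX \<Longrightarrow> g \<in> CX \<Longrightarrow> (\<lambda>x. f x * g x) \<in> CX" unfolding CX_def mem_Collect_eq by (auto intro!: continuous_intros)
lemma cx_cmult: "f \<in> CX \<Longrightarrow> (\<lambda>x. c * f x) \<in> CX" unfolding CX_def mem_Collect_eq by (auto intro!: continuous_intros)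
lemma cx_exp: "f \<in> CX \<Longrightarrow> (\<lambda>x. exp (f x)) \<in> CX" unfolding CX_def mem_Collect_eq by (auto intro!: continuous_intros)
lemma cx_ln: "f \<in> CX \<Longrightarrow> (\<And>x. f x > 0) \<Longrightarrow> (\<lambda>x. ln (f x)) \<in> CX" unfolding CX_def mem_Collect_eq
  by (auto intro!: continuous_intros) (metis order_less_irrefl)
lemma cx_sum: "finite I \<Longrightarrow> (\<And>i. i\<in>I \<Longrightarrow> F i \<in> CX) \<Longrightarrow> (\<lambda>x. \<Sum>i\<in>I. F i x) \<in> CX"
  unfolding CX_def mem_Collect_eq by (auto intro!: continuous_intros)
lemma cx_eta: "f \<in> CX \<Longrightarrow> (\<lambda>x. f x) \<in> CX" by simp

lemma cx_bounded: assumes "compact (UNIV::'a::topological_space set)" "(f::'a\<Rightarrow>real) \<in> CX"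
  shows "\<exists>B. \<forall>x. \<bar>f x\<bar> \<le> B"
proof -
  have "compact (range f)" using assms by (intro compact_continuous_image) (auto simp: CX_def)
  then have "bounded (range f)" by (rule compact_imp_bounded)
  then show ?thesis unfolding bounded_iff by auto
qed

lemma pf_add: "prob_functional \<mu> \<Longrightarrow> f\<in>CX \<Longrightarrow> g\<in>CX \<Longrightarrow> \<mu> (\<lambda>x. f x + g x) = \<mu> f + \<mu> g"
  unfolding prob_functional_def by blast
lemma pf_cmult: "prob_functional \<mu> \<Longrightarrow> f\<in>CX \<Longrightarrow> \<mu> (\<lambda>x. c * f x) = c * \<mu> f"
  unfolding prob_functional_def by blast
lemma pf_pos: "prob_functional \<mu> \<Longrightarrow> f\<in>CX \<Longrightarrow> (\<And>x. 0 \<le> f x) \<Longrightarrow> 0 \<le> \<mu> f"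
  unfolding prob_functional_def by blast
lemma pf_one: "prob_functional \<mu> \<Longrightarrow> \<mu> (\<lambda>x. 1) = 1"
  unfolding prob_functional_def by blast
lemma pf_const: assumes "prob_functional \<mu>" shows "\<mu> (\<lambda>x. c) = c"
  using pf_cmult[OF assms, of "\<lambda>x. 1" c] pf_one[OF assms] by simp
lemma pf_diff: assumes "prob_functional \<mu>" "f\<in>CX" "g\<in>CX" shows "\<mu> (\<lambda>x. f x - g x) = \<mu> f - \<mu> g"
proof -
  have "\<mu> (\<lambda>x. g x + (f x - g x)) = \<mu> g + \<mu> (\<lambda>x. f x - g x)"
    using assms by (intro pf_add cx_diff) auto
  then show ?thesis by simp
qed
lemma pf_mono: assumes "prob_functional \<mu>" "f\<in>CX" "g\<in>CX" "\<And>x. f x \<le> g x" shows "\<mu> f \<le> \<mu> g"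
  using pf_pos[OF assms(1) cx_diff[OF assms(3,2)]] pf_diff[OF assms(1,3,2)] assms(4) by simp
lemma pf_sum: assumes "prob_functional \<mu>" "finite I" "\<And>i. i\<in>I \<Longrightarrow> F i \<in> CX"
  shows "\<mu> (\<lambda>x. \<Sum>i\<in>I. F i x) = (\<Sum>i\<in>I. \<mu> (F i))"
  using assms(2,3)
proof (induction I rule: finite_induct)
  case empty then show ?case using pf_const[OF assms(1), of 0] by simp
next
  case (insert i I)
  have "\<mu> (\<lambda>x. \<Sum>i\<in>insert i I. F i x) = \<mu> (\<lambda>x. F i x + (\<Sum>i\<in>I. F i x))"
    using insert by simp
  also have "\<dots> = \<mu> (F i) + \<mu> (\<lambda>x. \<Sum>i\<in>I. F i x)"
    using insert by (intro pf_add[OF assms(1)] cx_sum) auto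
  finally show ?case using insert by simp
qed
lemma pf_abs: assumes "prob_functional \<mu>" "f\<in>CX" "\<And>x. \<bar>f x\<bar> \<le> B" shows "\<bar>\<mu> f\<bar> \<le> B"
proof -
  have b1: "\<And>x. f x \<le> B" "\<And>x. -B \<le> f x" using assms(3) abs_le_iff by (metis, smt (verit))
  have "\<mu> f \<le> \<mu> (\<lambda>x. B)" by (rule pf_mono[OF assms(1,2) cx_const]) (use b1 in auto)
  moreover have "\<mu> (\<lambda>x. - B) \<le> \<mu> f" by (rule pf_mono[OF assms(1) cx_const assms(2)]) (use b1 in auto)
  ultimately show ?thesis using pf_const[OF assms(1), of B] pf_const[OF assms(1), of "-B"] by (simp add: abs_le_iff)
qed

lemma MX_eval: "(\<lambda>f. f x) \<in> MX" unfolding MX_def prob_functional_def by auto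

lemma MX_comb: fixes \<mu> \<nu> :: "('a::topological_space \<Rightarrow> real) \<Rightarrow> real" assumes "\<mu> \<in> MX" "\<nu> \<in> MX" "0 \<le> t" "t \<le> 1"
  shows "(\<lambda>f. (1-t) * \<mu> f + t * \<nu> f) \<in> MX"
proof -
  have p: "prob_functional \<mu>" "prob_functional \<nu>" using assms by (auto simp: MX_def)
  show ?thesis unfolding MX_def mem_Collect_eq prob_functional_def
  proof (intro conjI ballI allI impI)
    fix f g :: "'a \<Rightarrow> real" assume "f \<in> CX" "g \<in> CX"
    then show "(1 - t) * \<mu> (\<lambda>x. f x + g x) + t * \<nu> (\<lambda>x. f x + g x) = (1 - t) * \<mu> f + t * \<nu> f + ((1 - t) * \<mu> g + t * \<nu> g)"
      using pf_add[OF p(1)] pf_add[OF p(2)] by (simp add: algebra_simps)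
  next
    fix f :: "'a \<Rightarrow> real" and c :: real assume "f \<in> CX"
    then show "(1 - t) * \<mu> (\<lambda>x. c * f x) + t * \<nu> (\<lambda>x. c * f x) = c * ((1 - t) * \<mu> f + t * \<nu> f)"
      using pf_cmult[OF p(1)] pf_cmult[OF p(2)] by (simp add: algebra_simps)
  next
    fix f :: "'a \<Rightarrow> real" assume "f \<in> CX" "\<forall>x. 0 \<le> f x"
    then have "0 \<le> \<mu> f" "0 \<le> \<nu> f" using pf_pos[OF p(1)] pf_pos[OF p(2)] by auto
    then show "0 \<le> (1 - t) * \<mu> f + t * \<nu> f" using assms by auto
  next
    show "(1 - t) * \<mu> (\<lambda>x. 1) + t * \<nu> (\<lambda>x. 1) = 1" using pf_one[OF p(1)] pf_one[OF p(2)] by simp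
  qed
qed

lemma MX_avg: assumes "finite S" "S \<noteq> {}"
  shows "(\<lambda>f. (\<Sum>g\<in>S. f (p g)) / card S) \<in> MX"
  using assms unfolding MX_def prob_functional_def
  by (auto simp: sum.distrib sum_distrib_left add_divide_distrib intro!: sum_nonneg divide_nonneg_nonneg)



definition pos_op :: "(('a::topological_space \<Rightarrow> real) \<Rightarrow> ('a \<Rightarrow> real)) \<Rightarrow> bool" where
  "pos_op L \<longleftrightarrow> (\<forall>f\<in>CX. L f \<in> CX) \<and>
     (\<forall>f\<in>CX. \<forall>g\<in>CX. L (\<lambda>x. f x + g x) = (\<lambda>x. L f x + L g x)) \<and>
     (\<forall>f\<in>CX. \<forall>c::real. L (\<lambda>x. c * f x) = (\<lambda>x. c * L f x)) \<and>
     (\<forall>f\<in>CX. (\<forall>x. 0 \<le> f x) \<longrightarrow> (\<forall>x. 0 \<le> L f x))"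

lemma op_cx: "pos_op L \<Longrightarrow> f \<in> CX \<Longrightarrow> L f \<in> CX" unfolding pos_op_def by blast
lemma op_add: "pos_op L \<Longrightarrow> f \<in> CX \<Longrightarrow> g \<in> CX \<Longrightarrow> L (\<lambda>x. f x + g x) = (\<lambda>x. L f x + L g x)"
  unfolding pos_op_def by blast
lemma op_cmult: "pos_op L \<Longrightarrow> f \<in> CX \<Longrightarrow> L (\<lambda>x. c * f x) = (\<lambda>x. c * L f x)"
  unfolding pos_op_def by blast
lemma op_pos: "pos_op L \<Longrightarrow> f \<in> CX \<Longrightarrow> (\<And>x. 0 \<le> f x) \<Longrightarrow> 0 \<le> L f x"
  unfolding pos_op_def by blast
lemma op_cmult1: assumes "pos_op L" shows "L (\<lambda>x. c) = (\<lambda>x. c * L (\<lambda>x. 1) x)"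
  using op_cmult[OF assms, of "\<lambda>x. 1" c] by simp
lemma op_diff: assumes "pos_op L" "f\<in>CX" "g\<in>CX" shows "L (\<lambda>x. f x - g x) = (\<lambda>x. L f x - L g x)"
proof -
  have "L (\<lambda>x. g x + (f x - g x)) = (\<lambda>x. L g x + L (\<lambda>x. f x - g x) x)"
    using assms by (intro op_add cx_diff) auto
  then show ?thesis by (auto simp: fun_eq_iff)
qed
lemma op_mono: assumes "pos_op L" "f\<in>CX" "g\<in>CX" "\<And>x. f x \<le> g x" shows "L f x \<le> L g x"
  using op_pos[OF assms(1) cx_diff[OF assms(3,2)], of x] op_diff[OF assms(1,3,2)] assms(4) by (simp add: fun_eq_iff)
lemma op_sum: assumes "pos_op L" "finite I" "\<And>i. i\<in>I \<Longrightarrow> F i \<in> CX"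
  shows "L (\<lambda>x. \<Sum>i\<in>I. F i x) = (\<lambda>x. \<Sum>i\<in>I. L (F i) x)"
  using assms(2,3)
proof (induction I rule: finite_induct)
  case empty then show ?case using op_cmult1[OF assms(1), of 0] by simp
next
  case (insert i I)
  have "L (\<lambda>x. \<Sum>i\<in>insert i I. F i x) = L (\<lambda>x. F i x + (\<Sum>i\<in>I. F i x))"
    using insert by simp
  also have "\<dots> = (\<lambda>x. L (F i) x + L (\<lambda>x. \<Sum>i\<in>I. F i x) x)"
    using insert by (intro op_add[OF assms(1)] cx_sum) auto
  finally show ?case using insert by simp
qed
lemma op_le_const: assumes "pos_op L" "f\<in>CX" "\<And>x. f x \<le> c" shows "L f x \<le> c * L (\<lambda>x. 1) x"
  using op_mono[OF assms(1,2) cx_const, of c x] assms(3) op_cmult1[OF assms(1), of c] by simp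

lemma pos_op_id: "pos_op (\<lambda>f. f)" unfolding pos_op_def by auto
lemma pos_op_comp: assumes "pos_op L" "pos_op M" shows "pos_op (\<lambda>f. L (M f))"
  unfolding pos_op_def using assms
  by (simp add: op_cx op_add op_cmult op_pos)

lemma pos_op_funpow: "pos_op L \<Longrightarrow> pos_op (L ^^ n)"
proof (induction n)
  case 0 then show ?case using pos_op_id by (simp add: id_def)
next
  case (Suc n) then show ?case using pos_op_comp[of L "L^^n"] by (simp add: comp_def)
qed

lemma transfer_pos_op: "transfer_operator \<alpha> A \<Longrightarrow> pos_op A"
  unfolding transfer_operator_def pos_op_def by blast

lemma cont_funpow: fixes \<alpha> :: "'a::topological_space \<Rightarrow> 'a" assumes "continuous_on UNIV \<alpha>" shows "continuous_on UNIV (\<alpha> ^^ n)"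
proof (induction n)
  case 0 then show ?case by (simp add: continuous_on_id')
next
  case (Suc n)
  have "continuous_on UNIV ((\<alpha> ^^ n) \<circ> \<alpha>)"
    by (rule continuous_on_compose[OF assms continuous_on_subset[OF Suc subset_UNIV]])
  then show ?case by (simp only: funpow_Suc_right)
qed

lemma cx_funpow: fixes \<alpha> :: "'a::topological_space \<Rightarrow> 'a" assumes "continuous_on UNIV \<alpha>" "f \<in> CX" shows "(\<lambda>x. f ((\<alpha> ^^ n) x)) \<in> CX"
  using continuous_on_compose[OF cont_funpow[OF assms(1), of n] continuous_on_subset[of UNIV f]] assms(2)
  by (simp add: CX_def comp_def)

lemma transfer_pow: fixes \<alpha> :: "'a::topological_space \<Rightarrow> 'a"
  assumes "transfer_operator \<alpha> A" "continuous_on UNIV \<alpha>" "f \<in> CX" "g \<in> CX"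
  shows "(A ^^ n) (\<lambda>x. f ((\<alpha> ^^ n) x) * g x) = (\<lambda>x. f x * (A ^^ n) g x)"
  using assms(3)
proof (induction n arbitrary: f)
  case 0 then show ?case by simp
next
  case (Suc n)
  have fa: "(\<lambda>x. f (\<alpha> x)) \<in> CX" using cx_funpow[OF assms(2) Suc.prems, of 1] by simp
  have "(A ^^ Suc n) (\<lambda>x. f ((\<alpha> ^^ Suc n) x) * g x) = A ((A ^^ n) (\<lambda>x. (\<lambda>y. f (\<alpha> y)) ((\<alpha> ^^ n) x) * g x))"
    by simp
  also have "\<dots> = A (\<lambda>x. f (\<alpha> x) * (A ^^ n) g x)" using Suc.IH[OF fa] by simp
  also have "\<dots> = (\<lambda>x. f x * A ((A ^^ n) g) x)"
    using assms(1) Suc.prems fa op_cx[OF pos_op_funpow[OF transfer_pos_op[OF assms(1)]] assms(4)]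
    unfolding transfer_operator_def by blast
  finally show ?case by simp
qed



lemma abstract_B:
  fixes a :: "'g \<Rightarrow> real" and Y V :: "('g \<Rightarrow> real) set"
  assumes P: "finite P" "\<forall>g\<in>P. 0 < a g" "(\<Sum>g\<in>P. a g) = 1"
   and B: "B \<ge> 1" "\<forall>y\<in>Y. \<forall>g\<in>P. 0 \<le> y g \<and> y g \<le> B" "\<forall>v\<in>V. \<forall>g\<in>P. 0 \<le> v g \<and> v g \<le> B"
   and sup: "\<forall>y\<in>Y. (\<forall>g\<in>P. 0 < y g) \<longrightarrow> (\<Sum>g\<in>P. a g * ln (y g / a g)) \<le> s0"
   and approx: "\<forall>\<eta>>0. \<exists>y\<in>Y. (\<forall>g\<in>P. 0 < y g) \<and> s0 - \<eta> < (\<Sum>g\<in>P. a g * ln (y g / a g))"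
   and conv: "\<forall>y\<in>Y. \<forall>v\<in>V. \<forall>t. 0 \<le> t \<and> t \<le> 1 \<longrightarrow> (\<lambda>g. (1-t) * y g + t * v g) \<in> Y"
   and gam: "\<gamma> > 0"
  shows "\<exists>y\<in>Y. (\<forall>g\<in>P. 0 < y g) \<and> (\<Sum>g\<in>P. a g * ln (y g / a g)) \<le> s0 \<and>
           (\<forall>v\<in>V. (\<Sum>g\<in>P. a g / y g * v g) \<le> 1 + \<gamma>)"
proof -
  define \<Phi> where "\<Phi> y = (\<Sum>g\<in>P. a g * ln (y g / a g))" for y :: "'g \<Rightarrow> real"
  define K0 where "K0 = (\<Sum>g\<in>P. \<bar>a g * ln (B / a g)\<bar>)"
  define \<rho> where "\<rho> g = a g * exp ((s0 - 1 - K0) / a g)" for g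
  define R where "R = 1 + (\<Sum>g\<in>P. B / \<rho> g)"
  have rho_pos: "\<And>g. g \<in> P \<Longrightarrow> 0 < \<rho> g" using P(2) by (auto simp: \<rho>_def)
  have R1: "1 \<le> R" unfolding R_def using rho_pos B(1)
    by (auto intro!: sum_nonneg divide_nonneg_pos)
  have BR: "\<And>g. g \<in> P \<Longrightarrow> B / \<rho> g < R"
  proof -
    fix g assume g: "g \<in> P"
    have "B / \<rho> g \<le> (\<Sum>g\<in>P. B / \<rho> g)"
      using g P(1) rho_pos B(1) by (intro member_le_sum) (auto intro!: divide_nonneg_pos)
    then show "B / \<rho> g < R" unfolding R_def by simp
  qed
  have lowb: "\<rho> g < y g" if y: "y \<in> Y" "\<forall>g\<in>P. 0 < y g" "s0 - 1 < \<Phi> y" and g: "g \<in> P" for y g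
  proof -
    have term_le: "a h * ln (y h / a h) \<le> \<bar>a h * ln (B / a h)\<bar>" if h: "h \<in> P" for h
    proof -
      have "ln (y h / a h) \<le> ln (B / a h)"
        using y h P(2) B(1,2) by (subst ln_le_cancel_iff) (auto intro!: divide_right_mono)
      then have "a h * ln (y h / a h) \<le> a h * ln (B / a h)"
        using h P(2) by (intro mult_left_mono) auto
      then show ?thesis by linarith
    qed
    have "\<Phi> y = a g * ln (y g / a g) + (\<Sum>h\<in>P - {g}. a h * ln (y h / a h))"
      unfolding \<Phi>_def using g P(1) by (simp add: sum.remove)
    moreover have "(\<Sum>h\<in>P - {g}. a h * ln (y h / a h)) \<le> (\<Sum>h\<in>P - {g}. \<bar>a h * ln (B / a h)\<bar>)"
      using term_le by (intro sum_mono) auto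
    moreover have "(\<Sum>h\<in>P - {g}. \<bar>a h * ln (B / a h)\<bar>) \<le> K0"
      unfolding K0_def using P(1) by (intro sum_mono2) auto
    ultimately have "s0 - 1 - K0 < a g * ln (y g / a g)" using y(3) by linarith
    then have "(s0 - 1 - K0) / a g < ln (y g / a g)"
      using g P(2) by (simp add: divide_less_eq mult.commute)
    then have "exp ((s0 - 1 - K0) / a g) < y g / a g"
      using y g P(2) by (metis exp_less_cancel_iff exp_ln divide_pos_pos)
    then show ?thesis unfolding \<rho>_def using g P(2) by (simp add: less_divide_eq mult.commute)
  qed
  define t where "t = min (1/2) (\<gamma> / (4 * R^2))"
  define \<eta> where "\<eta> = min 1 (\<gamma> * t / 2)"
  have t_pos: "0 < t" "t \<le> 1/2" "t \<le> \<gamma> / (4 * R^2)" using gam R1 by (auto simp: t_def)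
  have eta_pos: "0 < \<eta>" "\<eta> \<le> 1" "\<eta> \<le> \<gamma> * t / 2" using gam t_pos by (auto simp: \<eta>_def)
  obtain y where y: "y \<in> Y" "\<forall>g\<in>P. 0 < y g" "s0 - \<eta> < \<Phi> y"
    using approx eta_pos(1) unfolding \<Phi>_def by blast
  have ypos: "\<And>g. g\<in>P \<Longrightarrow> 0 < y g" using y by auto
  have yle: "\<Phi> y \<le> s0" using sup y unfolding \<Phi>_def by blast
  have yrho: "\<And>g. g \<in> P \<Longrightarrow> \<rho> g < y g" using lowb[OF y(1,2)] y(3) eta_pos by fastforce
  have main: "(\<Sum>g\<in>P. a g / y g * v g) \<le> 1 + \<gamma>" if v: "v \<in> V" for v
  proof -
    define d where "d g = (v g - y g) / y g" for g
    define z where "z g = (1-t) * y g + t * v g" for g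
    have zY: "z \<in> Y" using conv y(1) v t_pos unfolding z_def by auto
    have vb: "\<And>g. g \<in> P \<Longrightarrow> 0 \<le> v g \<and> v g \<le> B" using B(3) v by auto
    have zpos: "\<And>g. g \<in> P \<Longrightarrow> 0 < z g"
    proof -
      fix g assume g: "g \<in> P"
      have "0 < (1-t) * y g" using ypos[OF g] t_pos by auto
      moreover have "0 \<le> t * v g" using vb[OF g] t_pos by auto
      ultimately show "0 < z g" unfolding z_def by linarith
    qed
    have zle: "\<Phi> z \<le> s0" using sup zY zpos unfolding \<Phi>_def by blast
    have zd: "z g = y g * (1 + t * d g)" if g: "g \<in> P" for g
    proof -
      have "y g \<noteq> 0" using ypos[OF g] by simp
      then have "y g * (1 + t * d g) = y g + t * (v g - y g)" unfolding d_def by (simp add: field_simps)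
      then show ?thesis unfolding z_def by (simp add: algebra_simps)
    qed
    have dabs: "\<And>g. g \<in> P \<Longrightarrow> \<bar>d g\<bar> \<le> R"
    proof -
      fix g assume g: "g \<in> P"
      have "-1 \<le> d g" using vb[OF g] ypos[OF g] unfolding d_def by (simp add: field_simps)
      moreover have "d g \<le> v g / y g" using vb[OF g] ypos[OF g] unfolding d_def by (simp add: field_simps)
      moreover have "v g / y g \<le> B / \<rho> g"
        using vb[OF g] ypos[OF g] yrho[OF g] rho_pos[OF g]
        by (intro frac_le) auto
      ultimately show "\<bar>d g\<bar> \<le> R" using BR[OF g] R1 by linarith
    qed
    have lnz: "\<And>g. g \<in> P \<Longrightarrow> ln (z g / a g) = ln (y g / a g) + ln (1 + t * d g)"
    proof -
      fix g assume g: "g \<in> P"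
      have "0 < 1 + t * d g" using zpos[OF g] zd[OF g] ypos[OF g] by (simp add: zero_less_mult_iff)
      moreover have e: "z g / a g = (y g / a g) * (1 + t * d g)" using zd[OF g] by simp
      moreover have "0 < y g / a g" using ypos[OF g] P(2) g by simp
      ultimately show "ln (z g / a g) = ln (y g / a g) + ln (1 + t * d g)"
        using ln_mult_pos by (metis)
    qed
    have "\<Phi> z = \<Phi> y + (\<Sum>g\<in>P. a g * ln (1 + t * d g))"
      unfolding \<Phi>_def by (simp add: lnz distrib_left sum.distrib)
    then have sum_small: "(\<Sum>g\<in>P. a g * ln (1 + t * d g)) < \<eta>" using zle y(3) by linarith
    have lb: "\<And>g. g \<in> P \<Longrightarrow> a g * (t * d g - 2 * t^2 * R^2) \<le> a g * ln (1 + t * d g)"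
    proof -
      fix g assume g: "g \<in> P"
      have "-(1/2) \<le> t * d g"
      proof -
        have "- t \<le> t * d g" using dabs[OF g] t_pos zd g
          using \<open>\<And>g. g \<in> P \<Longrightarrow> 0 < z g\<close> vb[OF g] ypos[OF g] unfolding d_def
          by (simp add: field_simps)
        then show ?thesis using t_pos by linarith
      qed
      then have "t * d g - 2 * (t * d g)^2 \<le> ln (1 + t * d g)" by (rule ln_lower)
      moreover have "(t * d g)^2 \<le> t^2 * R^2"
      proof -
        have "\<bar>t * d g\<bar> \<le> t * R" using dabs[OF g] t_pos by (simp add: abs_mult mult_left_mono)
        then have "\<bar>t * d g\<bar>^2 \<le> (t * R)^2" by (rule power_mono) simp
        then show ?thesis by (simp add: power_mult_distrib)
      qed
      ultimately have "t * d g - 2 * t^2 * R^2 \<le> ln (1 + t * d g)" by linarith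
      then show "a g * (t * d g - 2 * t^2 * R^2) \<le> a g * ln (1 + t * d g)"
        using P(2) g by (intro mult_left_mono) auto
    qed
    have "(\<Sum>g\<in>P. a g * (t * d g - 2 * t^2 * R^2)) = t * (\<Sum>g\<in>P. a g * d g) - 2 * t^2 * R^2"
      using P(3) by (simp add: algebra_simps sum.distrib sum_distrib_left sum_subtractf sum_distrib_right[symmetric])
    moreover have "(\<Sum>g\<in>P. a g * (t * d g - 2 * t^2 * R^2)) \<le> (\<Sum>g\<in>P. a g * ln (1 + t * d g))"
      using lb by (rule sum_mono)
    ultimately have "t * (\<Sum>g\<in>P. a g * d g) < \<eta> + 2 * t^2 * R^2" using sum_small by linarith
    also have "\<dots> \<le> \<gamma> * t / 2 + 2 * t^2 * R^2" using eta_pos by linarith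
    also have "2 * t^2 * R^2 \<le> \<gamma> * t / 2"
    proof -
      have "t * R^2 \<le> \<gamma> / 4" using t_pos(3) R1 by (simp add: le_divide_eq)
      then have "t * (t * R^2) \<le> t * (\<gamma> / 4)" using t_pos by (intro mult_left_mono) auto
      then show ?thesis by (simp add: power2_eq_square algebra_simps)
    qed
    finally have "t * (\<Sum>g\<in>P. a g * d g) < t * \<gamma>" by (simp add: mult.commute)
    then have "(\<Sum>g\<in>P. a g * d g) < \<gamma>" using t_pos by simp
    moreover have "(\<Sum>g\<in>P. a g * d g) = (\<Sum>g\<in>P. a g / y g * v g) - 1"
    proof -
      have "(\<Sum>g\<in>P. a g * d g) = (\<Sum>g\<in>P. a g / y g * v g - a g)"
      proof (rule sum.cong)
        fix g assume g: "g \<in> P"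
        have "y g \<noteq> 0" using ypos[OF g] by simp
        then show "a g * d g = a g / y g * v g - a g" unfolding d_def by (simp add: field_simps)
      qed simp
      then show ?thesis using P(3) by (simp add: sum_subtractf)
    qed
    ultimately show ?thesis by linarith
  qed
  show ?thesis using y(1) ypos yle main unfolding \<Phi>_def by blast
qed



lemma pou_sum: "partition_of_unity D \<Longrightarrow> (\<lambda>x. \<Sum>g\<in>D. g x) = (\<lambda>x. 1)"
  unfolding partition_of_unity_def by auto

lemma construct_phi:
  fixes \<mu> :: "('a::topological_space \<Rightarrow> real) \<Rightarrow> real"
  assumes pf: "prob_functional \<mu>" and L: "pos_op L" and D: "partition_of_unity D"
   and w: "\<forall>x. (\<Sum>g\<in>D. exp (w g) * L g x) \<le> exp (s + (\<Sum>g\<in>D. \<mu> g * w g))"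
  shows "\<exists>\<phi>\<in>CX. \<forall>x. L (\<lambda>x. exp (\<phi> x)) x \<le> exp (s + \<mu> \<phi>)"
proof -
  have Dfin: "finite D" and DCX: "D \<subseteq> CX" and Dnn: "\<And>g x. g \<in> D \<Longrightarrow> 0 \<le> g x"
    and Dsum: "\<And>x. (\<Sum>g\<in>D. g x) = 1" using D unfolding partition_of_unity_def by auto
  define F where "F x = (\<Sum>g\<in>D. exp (w g) * g x)" for x
  have FCX: "F \<in> CX" unfolding F_def using Dfin DCX by (intro cx_sum cx_cmult) auto
  have Fpos: "0 < F x" for x
  proof -
    obtain g0 where g0: "g0 \<in> D" "0 < g0 x"
    proof (rule ccontr)
      assume "\<not> thesis"
      then have "\<forall>g\<in>D. g x \<le> 0" using that by force
      then have "(\<Sum>g\<in>D. g x) \<le> 0" by (intro sum_nonpos) auto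
      then show False using Dsum[of x] by simp
    qed
    show ?thesis unfolding F_def using Dfin g0 Dnn
      by (intro sum_pos2[where i=g0]) auto
  qed
  define \<phi> where "\<phi> x = ln (F x)" for x
  have phiCX: "\<phi> \<in> CX" unfolding \<phi>_def using cx_ln[OF FCX Fpos] .
  have expphi: "(\<lambda>x. exp (\<phi> x)) = F" using Fpos unfolding \<phi>_def by auto
  have LF: "L F = (\<lambda>x. \<Sum>g\<in>D. exp (w g) * L g x)"
  proof -
    have "L F = (\<lambda>x. \<Sum>g\<in>D. L (\<lambda>x. exp (w g) * g x) x)"
      unfolding F_def using Dfin DCX by (intro op_sum[OF L]) (auto intro!: cx_cmult)
    also have "\<dots> = (\<lambda>x. \<Sum>g\<in>D. exp (w g) * L g x)"
      using DCX op_cmult[OF L] by (intro ext sum.cong) (auto simp: subset_iff)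
    finally show ?thesis .
  qed
  have pw: "(\<Sum>g\<in>D. w g * g x) \<le> \<phi> x" for x
  proof -
    have "D \<noteq> {}" using Dsum[of x] by auto
    then have "exp (\<Sum>g\<in>D. g x *\<^sub>R w g) \<le> (\<Sum>g\<in>D. g x * exp (w g))"
      using Dfin Dsum[of x] Dnn by (intro convex_on_sum[OF _ _ exp_convex]) auto
    then have "exp (\<Sum>g\<in>D. w g * g x) \<le> F x" unfolding F_def by (simp add: mult.commute)
    then show ?thesis unfolding \<phi>_def using Fpos[of x] by (simp add: ln_ge_iff)
  qed
  have "\<mu> (\<lambda>x. \<Sum>g\<in>D. w g * g x) = (\<Sum>g\<in>D. \<mu> (\<lambda>x. w g * g x))"
    using Dfin DCX by (intro pf_sum[OF pf]) (auto intro!: cx_cmult)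
  also have "\<dots> = (\<Sum>g\<in>D. \<mu> g * w g)"
    using DCX pf_cmult[OF pf] by (intro sum.cong) (auto simp: subset_iff)
  moreover have "(\<lambda>x. \<Sum>g\<in>D. w g * g x) \<in> CX"
    using Dfin DCX by (intro cx_sum cx_cmult) auto
  ultimately have "(\<Sum>g\<in>D. \<mu> g * w g) \<le> \<mu> \<phi>"
    using pf_mono[OF pf _ phiCX, of "\<lambda>x. \<Sum>g\<in>D. w g * g x"] pw by simp
  then have "\<forall>x. L (\<lambda>x. exp (\<phi> x)) x \<le> exp (s + \<mu> \<phi>)"
    using w unfolding expphi LF by (meson add_le_cancel_left exp_le_cancel_iff order_trans)
  then show ?thesis using phiCX by blast
qed



lemma ereal_sum_minf:
  fixes f :: "'b \<Rightarrow> ereal"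
  assumes "finite P" "\<forall>i\<in>P. f i \<noteq> \<infinity>" "j \<in> P" "f j = -\<infinity>"
  shows "(\<Sum>i\<in>P. f i) = -\<infinity>"
  using assms
proof (induction P rule: finite_induct)
  case empty then show ?case by simp
next
  case (insert i P)
  show ?case
  proof (cases "j = i")
    case True
    have "(\<Sum>i\<in>P. f i) \<noteq> \<infinity>" using insert by (simp add: sum_Pinfty)
    then show ?thesis using insert True by simp
  next
    case False
    then have "(\<Sum>i\<in>P. f i) = -\<infinity>" using insert by auto
    then show ?thesis using insert by simp
  qed
qed

lemma tau_summand_ne_inf: "tau_summand a b \<noteq> \<infinity>" unfolding tau_summand_def by auto

lemma key_lemma:
  fixes \<alpha> :: "'a::topological_space \<Rightarrow> 'a" and A and \<mu> :: "('a \<Rightarrow> real) \<Rightarrow> real"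
  assumes cpt: "compact (UNIV :: 'a set)" and tr: "transfer_operator \<alpha> A"
    and mu: "\<mu> \<in> MX" and D: "partition_of_unity D" and tau: "tau_n A \<mu> k D < ereal s"
  shows "\<exists>\<phi>\<in>CX. \<forall>x. (A ^^ k) (\<lambda>x. exp (\<phi> x)) x \<le> exp (s + \<mu> \<phi>)"
proof -
  define L where "L = A ^^ k"
  have L: "pos_op L" unfolding L_def by (rule pos_op_funpow[OF transfer_pos_op[OF tr]])
  have pf: "prob_functional \<mu>" using mu by (simp add: MX_def)
  have Dfin: "finite D" and DCX: "D \<subseteq> CX" and Dnn: "\<And>g x. g \<in> D \<Longrightarrow> 0 \<le> g x"
    and Dsum: "\<And>x. (\<Sum>g\<in>D. g x) = 1" using D unfolding partition_of_unity_def by auto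
  have gCX: "\<And>g. g \<in> D \<Longrightarrow> g \<in> CX" using DCX by auto
  have a_nn: "\<And>g. g \<in> D \<Longrightarrow> 0 \<le> \<mu> g" using pf_pos[OF pf gCX] Dnn by blast
  have a_sum: "(\<Sum>g\<in>D. \<mu> g) = 1"
    using pf_sum[OF pf Dfin, of "\<lambda>g. g"] gCX pou_sum[OF D] pf_one[OF pf] by simp
  have hCX: "\<And>g. g \<in> D \<Longrightarrow> L g \<in> CX" using op_cx[OF L gCX] .
  have hnn: "\<And>g x. g \<in> D \<Longrightarrow> 0 \<le> L g x" using op_pos[OF L gCX] Dnn by blast
  have hsum: "\<And>x. (\<Sum>g\<in>D. L g x) = L (\<lambda>x. 1) x"
    using op_sum[OF L Dfin, of "\<lambda>g. g"] gCX pou_sum[OF D] by (metis (no_types, lifting))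
  obtain B0 where B0: "\<And>x. \<bar>L (\<lambda>x. 1) x\<bar> \<le> B0"
    using cx_bounded[OF cpt op_cx[OF L cx_const]] by blast
  define B where "B = max 1 B0"
  have B1: "1 \<le> B" unfolding B_def by simp
  have L1B: "\<And>x. L (\<lambda>x. 1) x \<le> B" using B0 unfolding B_def by (smt (verit) abs_le_iff)
  have hB: "\<And>g x. g \<in> D \<Longrightarrow> L g x \<le> B"
  proof -
    fix g x assume g: "g \<in> D"
    have "L g x \<le> (\<Sum>g\<in>D. L g x)" using g Dfin hnn by (intro member_le_sum) auto
    then show "L g x \<le> B" using hsum L1B by (metis order_trans)
  qed
  define P where "P = {g\<in>D. \<mu> g \<noteq> 0}"
  have PD: "P \<subseteq> D" and Pfin: "finite P" using Dfin by (auto simp: P_def)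
  have Ppos: "\<forall>g\<in>P. 0 < \<mu> g" using a_nn by (force simp: P_def)
  have Psum: "(\<Sum>g\<in>P. \<mu> g) = 1"
    using a_sum sum.mono_neutral_right[OF Dfin PD, of \<mu>] by (auto simp: P_def)
  have Pne: "P \<noteq> {}" using Psum by auto
  define S where "S m = (\<Sum>g\<in>D. tau_summand (\<mu> g) (m (L g)))" for m :: "('a \<Rightarrow> real) \<Rightarrow> real"
  have S_le: "\<And>m. m \<in> MX \<Longrightarrow> S m \<le> tau_n A \<mu> k D"
    unfolding S_def tau_n_def L_def by (rule SUP_upper)
  have mh_nn: "\<And>(m::('a \<Rightarrow> real) \<Rightarrow> real) g. m \<in> MX \<Longrightarrow> g \<in> D \<Longrightarrow> 0 \<le> m (L g)"
    using pf_pos hCX hnn by (metis MX_def mem_Collect_eq)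
  have mh_le: "\<And>(m::('a \<Rightarrow> real) \<Rightarrow> real) g. m \<in> MX \<Longrightarrow> g \<in> D \<Longrightarrow> m (L g) \<le> B"
  proof -
    fix m :: "('a \<Rightarrow> real) \<Rightarrow> real" and g assume m: "m \<in> MX" and g: "g \<in> D"
    have pm: "prob_functional m" using m by (simp add: MX_def)
    have "m (L g) \<le> m (\<lambda>x. B)" using pf_mono[OF pm hCX[OF g] cx_const] hB[OF g] by blast
    then show "m (L g) \<le> B" using pf_const[OF pm, of B] by simp
  qed
  have Sform: "S m = ereal (\<Sum>g\<in>P. \<mu> g * ln (m (L g) / \<mu> g))"
    if m: "m \<in> MX" "\<forall>g\<in>P. 0 < m (L g)" for m
  proof -
    have "S m = (\<Sum>g\<in>P. tau_summand (\<mu> g) (m (L g)))"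
      unfolding S_def using Dfin PD
      by (intro sum.mono_neutral_right) (auto simp: P_def tau_summand_def)
    also have "\<dots> = (\<Sum>g\<in>P. ereal (\<mu> g * ln (m (L g) / \<mu> g)))"
      using m Ppos by (intro sum.cong) (auto simp: tau_summand_def)
    finally show ?thesis by simp
  qed
  have Sminf: "S m = -\<infinity>" if m: "m \<in> MX" and g: "g \<in> P" "m (L g) = 0" for m g
    unfolding S_def
    by (rule ereal_sum_minf[OF Dfin _ _, of _ g]) (use g PD Ppos tau_summand_ne_inf in \<open>auto simp: tau_summand_def\<close>)
  have Spos: "\<forall>g\<in>P. 0 < m (L g)" if m: "m \<in> MX" "S m \<noteq> -\<infinity>" for m
  proof
    fix g assume g: "g \<in> P"
    have "m (L g) \<noteq> 0" using Sminf[OF m(1) g] m(2) by auto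
    moreover have "0 \<le> m (L g)" using mh_nn[OF m(1)] g PD by blast
    ultimately show "0 < m (L g)" by simp
  qed
  have "\<exists>w. \<forall>x. (\<Sum>g\<in>D. exp (w g) * L g x) \<le> exp (s + (\<Sum>g\<in>D. \<mu> g * w g))"
  proof (cases "tau_n A \<mu> k D = -\<infinity>")
    case True
    then have allminf: "\<And>m. m \<in> MX \<Longrightarrow> S m = -\<infinity>" using S_le by (metis ereal_infty_less_eq(2))
    have "\<exists>g0\<in>P. \<forall>x. L g0 x = 0"
    proof (rule ccontr)
      assume "\<not> ?thesis"
      then have "\<forall>g\<in>P. \<exists>x. L g x \<noteq> 0" by blast
      then obtain p where p: "\<And>g. g \<in> P \<Longrightarrow> L g (p g) \<noteq> 0" by metis
      define m where "m = (\<lambda>f. (\<Sum>g'\<in>P. f (p g')) / card P)"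
      have mMX: "m \<in> MX" unfolding m_def by (rule MX_avg[OF Pfin Pne])
      have "\<forall>g\<in>P. 0 < m (L g)"
      proof
        fix g assume g: "g \<in> P"
        have "0 < L g (p g)" using p[OF g] hnn[of g "p g"] g PD by force
        then have "0 < (\<Sum>g'\<in>P. L g (p g'))"
          using Pfin g hnn PD by (intro sum_pos2[where i=g]) auto
        then show "0 < m (L g)" unfolding m_def using Pne Pfin by (simp add: card_gt_0_iff)
      qed
      then have "S m \<noteq> -\<infinity>" using Sform[OF mMX] by simp
      then show False using allminf[OF mMX] by simp
    qed
    then obtain g0 where g0: "g0 \<in> P" "\<And>x. L g0 x = 0" by blast
    define w where "w g = (if g = g0 then (ln B - s) / \<mu> g0 else 0)" for g
    have a0: "0 < \<mu> g0" using Ppos g0 by auto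
    have "\<forall>x. (\<Sum>g\<in>D. exp (w g) * L g x) \<le> exp (s + (\<Sum>g\<in>D. \<mu> g * w g))"
    proof
      fix x
      have "(\<Sum>g\<in>D. exp (w g) * L g x) = (\<Sum>g\<in>D. L g x)"
        using g0 by (intro sum.cong) (auto simp: w_def)
      also have "\<dots> \<le> B" using hsum L1B by simp
      also have "\<dots> = exp (s + (\<Sum>g\<in>D. \<mu> g * w g))"
      proof -
        have "(\<Sum>g\<in>D. \<mu> g * w g) = \<mu> g0 * ((ln B - s) / \<mu> g0)"
          unfolding w_def using g0 PD Dfin by (auto simp: if_distrib sum.delta cong: if_cong)
        then have "(\<Sum>g\<in>D. \<mu> g * w g) = ln B - s" using a0 by simp
        then show ?thesis using B1 by simp
      qed
      finally show "(\<Sum>g\<in>D. exp (w g) * L g x) \<le> exp (s + (\<Sum>g\<in>D. \<mu> g * w g))" .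
    qed
    then show ?thesis by blast
  next
    case False
    have "tau_n A \<mu> k D \<noteq> \<infinity>" using tau by auto
    then obtain s0 where s0: "tau_n A \<mu> k D = ereal s0" using False by (cases "tau_n A \<mu> k D") auto
    have ss0: "s0 < s" using tau s0 by simp
    define \<gamma> where "\<gamma> = (s - s0) / 2"
    have gam: "0 < \<gamma>" using ss0 by (simp add: \<gamma>_def)
    define Y where "Y = {(\<lambda>g. m (L g)) | m. m \<in> MX}"
    define V where "V = {(\<lambda>g. L g x) | x. True}"
    have "\<exists>y\<in>Y. (\<forall>g\<in>P. 0 < y g) \<and> (\<Sum>g\<in>P. \<mu> g * ln (y g / \<mu> g)) \<le> s0 \<and>
           (\<forall>v\<in>V. (\<Sum>g\<in>P. \<mu> g / y g * v g) \<le> 1 + \<gamma>)"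
    proof (rule abstract_B[OF Pfin Ppos Psum B1 _ _ _ _ _ gam])
      show "\<forall>y\<in>Y. \<forall>g\<in>P. 0 \<le> y g \<and> y g \<le> B" unfolding Y_def using mh_nn mh_le PD by blast
      show "\<forall>v\<in>V. \<forall>g\<in>P. 0 \<le> v g \<and> v g \<le> B" unfolding V_def using hnn hB PD by blast
      show "\<forall>y\<in>Y. (\<forall>g\<in>P. 0 < y g) \<longrightarrow> (\<Sum>g\<in>P. \<mu> g * ln (y g / \<mu> g)) \<le> s0"
      proof (intro ballI impI)
        fix y assume "y \<in> Y" "\<forall>g\<in>P. 0 < y g"
        then obtain m where m: "m \<in> MX" "y = (\<lambda>g. m (L g))" "\<forall>g\<in>P. 0 < m (L g)" unfolding Y_def by auto
        have "ereal (\<Sum>g\<in>P. \<mu> g * ln (m (L g) / \<mu> g)) \<le> ereal s0"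
          using Sform[OF m(1,3)] S_le[OF m(1)] s0 by simp
        then show "(\<Sum>g\<in>P. \<mu> g * ln (y g / \<mu> g)) \<le> s0" using m(2) by simp
      qed
      show "\<forall>\<eta>>0. \<exists>y\<in>Y. (\<forall>g\<in>P. 0 < y g) \<and> s0 - \<eta> < (\<Sum>g\<in>P. \<mu> g * ln (y g / \<mu> g))"
      proof (intro allI impI)
        fix \<eta> :: real assume eta: "0 < \<eta>"
        have "ereal (s0 - \<eta>) < tau_n A \<mu> k D" using s0 eta by simp
        then obtain m where m: "m \<in> MX" "ereal (s0 - \<eta>) < S m"
          unfolding tau_n_def S_def L_def by (auto simp: less_SUP_iff)
        have "S m \<noteq> -\<infinity>" using m(2) by auto
        then have mpos: "\<forall>g\<in>P. 0 < m (L g)" using Spos[OF m(1)] by blast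
        have "s0 - \<eta> < (\<Sum>g\<in>P. \<mu> g * ln (m (L g) / \<mu> g))" using m(2) Sform[OF m(1) mpos] by simp
        then show "\<exists>y\<in>Y. (\<forall>g\<in>P. 0 < y g) \<and> s0 - \<eta> < (\<Sum>g\<in>P. \<mu> g * ln (y g / \<mu> g))"
          using m(1) mpos unfolding Y_def by (intro bexI[of _ "\<lambda>g. m (L g)"]) auto
      qed
      show "\<forall>y\<in>Y. \<forall>v\<in>V. \<forall>t. 0 \<le> t \<and> t \<le> 1 \<longrightarrow> (\<lambda>g. (1 - t) * y g + t * v g) \<in> Y"
      proof (intro ballI allI impI)
        fix y v and t :: real assume y: "y \<in> Y" and v: "v \<in> V" and t: "0 \<le> t \<and> t \<le> 1"
        obtain m where m: "m \<in> MX" "y = (\<lambda>g. m (L g))" using y unfolding Y_def by auto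
        obtain x where x: "v = (\<lambda>g. L g x)" using v unfolding V_def by auto
        have "(\<lambda>f. (1-t) * m f + t * f x) \<in> MX" using MX_comb[OF m(1) MX_eval] t by blast
        then show "(\<lambda>g. (1 - t) * y g + t * v g) \<in> Y" unfolding Y_def m(2) x by force
      qed
    qed
    then obtain y where yY: "y \<in> Y" and ypos: "\<forall>g\<in>P. 0 < y g"
      and yle: "(\<Sum>g\<in>P. \<mu> g * ln (y g / \<mu> g)) \<le> s0"
      and ymain: "\<forall>v\<in>V. (\<Sum>g\<in>P. \<mu> g / y g * v g) \<le> 1 + \<gamma>" by blast
    define \<zeta> where "\<zeta> = \<gamma> / (B * card D + 1)"
    have "0 \<le> B * real (card D)" using B1 by simp
    then have "0 < B * real (card D) + 1" by linarith
    then have zeta: "0 < \<zeta>" using gam unfolding \<zeta>_def by simp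
    have zetaB: "\<zeta> * (card D * B) \<le> \<gamma>"
    proof -
      have "\<zeta> * (card D * B) = \<gamma> * ((B * card D) / (B * card D + 1))" unfolding \<zeta>_def by (simp add: field_simps)
      also have "\<dots> \<le> \<gamma> * 1"
      proof -
        have "0 \<le> B * real (card D)" using B1 by simp
        then have "(B * card D) / (B * card D + 1) \<le> 1" by (simp add: divide_le_eq)
        then show ?thesis using gam by (intro mult_left_mono) auto
      qed
      finally show ?thesis by simp
    qed
    define w where "w g = (if g \<in> P then ln (\<mu> g / y g) else ln \<zeta>)" for g
    have "\<forall>x. (\<Sum>g\<in>D. exp (w g) * L g x) \<le> exp (s + (\<Sum>g\<in>D. \<mu> g * w g))"
    proof
      fix x
      have split1: "(\<Sum>g\<in>D. exp (w g) * L g x) = (\<Sum>g\<in>D - P. exp (w g) * L g x) + (\<Sum>g\<in>P. exp (w g) * L g x)"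
        using sum.subset_diff[OF PD Dfin] by blast
      have "(\<Sum>g\<in>P. exp (w g) * L g x) = (\<Sum>g\<in>P. \<mu> g / y g * L g x)"
        using ypos Ppos by (intro sum.cong) (auto simp: w_def)
      also have "\<dots> \<le> 1 + \<gamma>" using ymain[rule_format, of "\<lambda>g. L g x"] unfolding V_def by blast
      finally have p1: "(\<Sum>g\<in>P. exp (w g) * L g x) \<le> 1 + \<gamma>" .
      have "(\<Sum>g\<in>D - P. exp (w g) * L g x) = (\<Sum>g\<in>D - P. \<zeta> * L g x)"
        using zeta by (intro sum.cong) (auto simp: w_def)
      also have "\<dots> \<le> (\<Sum>g\<in>D - P. \<zeta> * B)"
        using zeta hB by (intro sum_mono mult_left_mono) auto
      also have "\<dots> \<le> \<zeta> * (card D * B)"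
      proof -
        have "card (D - P) \<le> card D" using Dfin by (simp add: card_mono)
        then have "real (card (D - P)) * (\<zeta> * B) \<le> real (card D) * (\<zeta> * B)"
          using zeta B1 by (intro mult_right_mono) auto
        then show ?thesis by (simp add: algebra_simps)
      qed
      also have "\<dots> \<le> \<gamma>" by (rule zetaB)
      finally have p2: "(\<Sum>g\<in>D - P. exp (w g) * L g x) \<le> \<gamma>" .
      have "(\<Sum>g\<in>D. \<mu> g * w g) = (\<Sum>g\<in>P. \<mu> g * w g)"
        using Dfin PD by (intro sum.mono_neutral_right) (auto simp: P_def)
      also have "\<dots> = - (\<Sum>g\<in>P. \<mu> g * ln (y g / \<mu> g))"
      proof -
        have "(\<Sum>g\<in>P. \<mu> g * w g) = (\<Sum>g\<in>P. - (\<mu> g * ln (y g / \<mu> g)))"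
        proof (rule sum.cong)
          fix g assume g: "g \<in> P"
          have "ln (\<mu> g / y g) = - ln (y g / \<mu> g)"
            using ypos Ppos g by (simp add: ln_divide_pos)
          then show "\<mu> g * w g = - (\<mu> g * ln (y g / \<mu> g))" using g by (simp add: w_def)
        qed simp
        then show ?thesis by (simp add: sum_negf)
      qed
      finally have "s - s0 \<le> s + (\<Sum>g\<in>D. \<mu> g * w g)" using yle by linarith
      then have "exp (s - s0) \<le> exp (s + (\<Sum>g\<in>D. \<mu> g * w g))" by simp
      moreover have "1 + (s - s0) \<le> exp (s - s0)" by (rule exp_ge_add_one_self)
      moreover have "(\<Sum>g\<in>D. exp (w g) * L g x) \<le> 1 + (s - s0)"
      proof -
        have "(\<Sum>g\<in>D. exp (w g) * L g x) \<le> \<gamma> + (1 + \<gamma>)" unfolding split1 by (rule add_mono[OF p2 p1])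
        then show ?thesis unfolding \<gamma>_def by simp
      qed
      ultimately show "(\<Sum>g\<in>D. exp (w g) * L g x) \<le> exp (s + (\<Sum>g\<in>D. \<mu> g * w g))" by linarith
    qed
    then show ?thesis by blast
  qed
  then obtain w where "\<forall>x. (\<Sum>g\<in>D. exp (w g) * L g x) \<le> exp (s + (\<Sum>g\<in>D. \<mu> g * w g))" by blast
  from construct_phi[OF pf L D this] show ?thesis unfolding L_def .
qed



lemma regroup: fixes g :: "nat \<Rightarrow> real" and k N :: nat shows "(\<Sum>r<k. \<Sum>i<N. g (r + i * k)) = (\<Sum>m<N * k. g m)"
proof -
  have "(\<Sum>m<N * k. g m) = (\<Sum>i<N. sum g {i * k..<i * k + k})"
    using sum.nat_group[of g k N] by simp
  also have "\<dots> = (\<Sum>i<N. \<Sum>r<k. g (r + i * k))"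
  proof (rule sum.cong[OF refl])
    fix i
    have "sum g {0 + i * k..<k + i * k} = (\<Sum>r\<in>{0..<k}. g (r + i * k))"
      by (rule sum.shift_bounds_nat_ivl)
    then show "sum g {i * k..<i * k + k} = (\<Sum>r<k. g (r + i * k))"
      by (simp add: add.commute atLeast0LessThan)
  qed
  also have "\<dots> = (\<Sum>r<k. \<Sum>i<N. g (r + i * k))" by (rule sum.swap)
  finally show ?thesis by simp
qed

lemma G_bound:
  fixes \<alpha> :: "'a::topological_space \<Rightarrow> 'a"
  assumes tr: "transfer_operator \<alpha> A" and cont: "continuous_on UNIV \<alpha>" and phi: "\<phi> \<in> CX"
    and hyp: "\<forall>x. (A ^^ k) (\<lambda>x. exp (\<phi> x)) x \<le> exp \<Lambda>"
  shows "(\<lambda>y. exp (\<Sum>i<j. \<phi> ((\<alpha> ^^ (i * k)) y))) \<in> CX \<and>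
         (\<forall>x. (A ^^ (j * k)) (\<lambda>y. exp (\<Sum>i<j. \<phi> ((\<alpha> ^^ (i * k)) y))) x \<le> exp (real j * \<Lambda>))"
proof (induction j)
  case 0
  have "(A ^^ 0) (\<lambda>y. 1) = (\<lambda>y. 1)" by simp
  then show ?case by simp
next
  case (Suc j)
  define G where "G y = exp (\<Sum>i<j. \<phi> ((\<alpha> ^^ (i * k)) y))" for y
  have GCX: "G \<in> CX" and GB: "\<And>x. (A ^^ (j * k)) G x \<le> exp (real j * \<Lambda>)"
    using Suc unfolding G_def by auto
  have Gnn: "\<And>y. 0 \<le> G y" unfolding G_def by simp
  have pA: "pos_op A" by (rule transfer_pos_op[OF tr])
  have eq: "(\<lambda>y. exp (\<Sum>i<Suc j. \<phi> ((\<alpha> ^^ (i * k)) y))) = (\<lambda>y. G ((\<alpha> ^^ k) y) * exp (\<phi> y))"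
  proof
    fix y
    have "(\<Sum>i<Suc j. \<phi> ((\<alpha> ^^ (i * k)) y)) = \<phi> y + (\<Sum>i<j. \<phi> ((\<alpha> ^^ (Suc i * k)) y))"
      by (subst sum.lessThan_Suc_shift) simp
    also have "(\<Sum>i<j. \<phi> ((\<alpha> ^^ (Suc i * k)) y)) = (\<Sum>i<j. \<phi> ((\<alpha> ^^ (i * k)) ((\<alpha> ^^ k) y)))"
    proof (intro sum.cong refl)
      fix i
      have e: "Suc i * k = i * k + k" by simp
      show "\<phi> ((\<alpha> ^^ (Suc i * k)) y) = \<phi> ((\<alpha> ^^ (i * k)) ((\<alpha> ^^ k) y))"
        by (simp only: e funpow_add comp_def)
    qed
    finally show "exp (\<Sum>i<Suc j. \<phi> ((\<alpha> ^^ (i * k)) y)) = G ((\<alpha> ^^ k) y) * exp (\<phi> y)"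
      unfolding G_def by (simp add: exp_add)
  qed
  have newCX: "(\<lambda>y. G ((\<alpha> ^^ k) y) * exp (\<phi> y)) \<in> CX"
    by (intro cx_mult cx_funpow[OF cont GCX] cx_exp phi)
  have step: "(A ^^ k) (\<lambda>y. G ((\<alpha> ^^ k) y) * exp (\<phi> y)) = (\<lambda>y. G y * (A ^^ k) (\<lambda>x. exp (\<phi> x)) y)"
    by (rule transfer_pow[OF tr cont GCX cx_exp[OF phi]])
  have pK: "pos_op (A ^^ k)" and pJ: "pos_op (A ^^ (j * k))" using pos_op_funpow[OF pA] by auto
  have stepCX: "(\<lambda>y. G y * (A ^^ k) (\<lambda>x. exp (\<phi> x)) y) \<in> CX"
    using op_cx[OF pK newCX] step by simp
  have "\<forall>x. (A ^^ (Suc j * k)) (\<lambda>y. G ((\<alpha> ^^ k) y) * exp (\<phi> y)) x \<le> exp (real (Suc j) * \<Lambda>)"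
  proof
    fix x
    have "(A ^^ (Suc j * k)) (\<lambda>y. G ((\<alpha> ^^ k) y) * exp (\<phi> y)) x
        = (A ^^ (j * k)) ((A ^^ k) (\<lambda>y. G ((\<alpha> ^^ k) y) * exp (\<phi> y))) x"
    proof -
      have e: "Suc j * k = j * k + k" by simp
      show ?thesis by (simp only: e funpow_add comp_def)
    qed
    also have "\<dots> = (A ^^ (j * k)) (\<lambda>y. G y * (A ^^ k) (\<lambda>x. exp (\<phi> x)) y) x" by (simp add: step)
    also have "\<dots> \<le> (A ^^ (j * k)) (\<lambda>y. exp \<Lambda> * G y) x"
      using hyp Gnn by (intro op_mono[OF pJ stepCX cx_cmult[OF GCX]]) (simp add: mult.commute mult_left_mono)
    also have "\<dots> = exp \<Lambda> * (A ^^ (j * k)) G x" using op_cmult[OF pJ GCX] by simp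
    also have "\<dots> \<le> exp \<Lambda> * exp (real j * \<Lambda>)" using GB by simp
    also have "\<dots> = exp (real (Suc j) * \<Lambda>)" by (simp add: exp_add[symmetric] algebra_simps)
    finally show "(A ^^ (Suc j * k)) (\<lambda>y. G ((\<alpha> ^^ k) y) * exp (\<phi> y)) x \<le> exp (real (Suc j) * \<Lambda>)" .
  qed
  then show ?case using newCX unfolding eq by simp
qed



lemma nat_facts:
  fixes n k :: nat assumes k: "1 \<le> k"
  shows "(n div k - 1) * k \<le> n" "n \<le> (n div k - 1) * k + 2 * k"
    "1 \<le> n div k - 1 \<Longrightarrow> (n div k - 1) * k + k \<le> n"
proof -
  define q where "q = n div k"
  have qk: "q * k \<le> n" unfolding q_def by (simp add: div_times_less_eq_dividend)
  have nq: "n < q * k + k"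
  proof -
    have "n = q * k + n mod k" unfolding q_def by simp
    moreover have "n mod k < k" using k by simp
    ultimately show ?thesis by linarith
  qed
  show "(n div k - 1) * k \<le> n" using qk unfolding q_def[symmetric]
    by (metis diff_le_self le_trans mult_le_mono1)
  show "n \<le> (n div k - 1) * k + 2 * k"
  proof (cases "q = 0")
    case True then show ?thesis using nq unfolding q_def[symmetric] by simp
  next
    case False
    then have "(q - 1) * k + k = q * k" by (metis Suc_pred' add.commute mult_Suc neq0_conv)
    then show ?thesis using nq unfolding q_def[symmetric] by linarith
  qed
  show "(n div k - 1) * k + k \<le> n" if "1 \<le> n div k - 1"
  proof -
    have "q \<ge> 1" using that unfolding q_def[symmetric] by simp
    then have "(q - 1) * k + k = q * k" by (metis Suc_pred' add.commute mult_Suc le_add1 less_le_trans less_numeral_extra(1) plus_1_eq_Suc)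
    then show ?thesis using qk unfolding q_def[symmetric] by linarith
  qed
qed



lemma supnorm_le: assumes "\<And>x. 0 \<le> f x" "\<And>x. f x \<le> c" shows "supnorm f \<le> c"
  unfolding supnorm_def using assms by (intro cSUP_least) auto

lemma tilt:
  fixes \<alpha> :: "'a::topological_space \<Rightarrow> 'a" and \<mu> :: "('a \<Rightarrow> real) \<Rightarrow> real"
  assumes cpt: "compact (UNIV :: 'a set)" and tr: "transfer_operator \<alpha> A"
    and cont: "continuous_on UNIV \<alpha>" and mu: "\<mu> \<in> MX" and phi: "\<phi> \<in> CX" and k: "1 \<le> k"
    and hyp: "\<forall>x. (A ^^ k) (\<lambda>x. exp (\<phi> x)) x \<le> exp \<Lambda>" and eta: "0 < \<eta>"
  shows "\<exists>U C chi. weak_star_nhd \<mu> U \<and>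
           (\<forall>n\<ge>1. chi n \<in> CX \<and> (\<forall>x. indicator (Xn \<alpha> n U) x \<le> chi n x)) \<and>
           (\<forall>n\<ge>1. supnorm ((A ^^ n) (chi n)) \<le> C * exp (real n * ((\<Lambda> - \<mu> \<phi> + \<eta>) / real k)))"
proof -
  have pf: "prob_functional \<mu>" using mu by (simp add: MX_def)
  have pA: "pos_op A" by (rule transfer_pos_op[OF tr])
  have pP: "\<And>p. pos_op (A ^^ p)" using pos_op_funpow[OF pA] .
  obtain M where M: "\<And>x. \<bar>\<phi> x\<bar> \<le> M" using cx_bounded[OF cpt phi] by blast
  have M0: "0 \<le> M" using M[of undefined] by simp
  define c0 where "c0 = \<mu> \<phi> - \<eta>"
  define \<beta> where "\<beta> = \<Lambda> - c0"
  have muphi: "\<bar>\<mu> \<phi>\<bar> \<le> M" using pf_abs[OF pf phi M] .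
  define W where "W = 2 * (\<bar>c0\<bar> + M)"
  define Nf where "Nf n = n div k - 1" for n
  define E where "E n r x = (\<Sum>i<Nf n. \<phi> ((\<alpha> ^^ (r + i * k)) x))" for n r x
  define chi where "chi n x = exp W * (\<Sum>r<k. exp (E n r x - real (Nf n) * c0))" for n x
  define U where "U = {\<nu>\<in>MX. \<forall>f\<in>{\<phi>}. \<bar>\<nu> f - \<mu> f\<bar> < \<eta>}"
  have "\<forall>p. \<exists>B. \<forall>x. \<bar>(A ^^ p) (\<lambda>x. 1) x\<bar> \<le> B"
    using cx_bounded[OF cpt op_cx[OF pP cx_const]] by blast
  then obtain Bf where Bf: "\<And>p x. \<bar>(A ^^ p) (\<lambda>x. 1) x\<bar> \<le> Bf p" by metis
  have Bf0: "\<And>p. 0 \<le> Bf p" using Bf by (metis abs_ge_zero order_trans)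
  define Q where "Q = 1 + (\<Sum>p\<le>2*k. Bf p)"
  have Q1: "1 \<le> Q" unfolding Q_def using Bf0 by (simp add: sum_nonneg)
  have QB: "\<And>p x. p \<le> 2 * k \<Longrightarrow> (A ^^ p) (\<lambda>x. 1) x \<le> Q"
  proof -
    fix p x assume p: "p \<le> 2 * k"
    have "(A ^^ p) (\<lambda>x. 1) x \<le> Bf p" using Bf[of p x] by simp
    also have "Bf p \<le> (\<Sum>p\<le>2*k. Bf p)" using p Bf0 by (intro member_le_sum) auto
    finally show "(A ^^ p) (\<lambda>x. 1) x \<le> Q" unfolding Q_def by simp
  qed
  define C where "C = exp W * real k * Q^2 * exp (2 * \<bar>\<beta>\<bar>)"
  have nhd: "weak_star_nhd \<mu> U" unfolding weak_star_nhd_def U_def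
    using phi eta by (intro exI[of _ "{\<phi>}"] exI[of _ \<eta>]) auto
  have ECX: "(\<lambda>x. E n r x - real (Nf n) * c0) \<in> CX" for n r
    unfolding E_def by (intro cx_diff cx_sum cx_funpow[OF cont phi]) auto
  have chiCX: "chi n \<in> CX" for n
  proof -
    have "(\<lambda>x. exp W * (\<Sum>r<k. exp (E n r x - real (Nf n) * c0))) \<in> CX"
      by (intro cx_cmult cx_sum cx_exp ECX) auto
    then show ?thesis unfolding chi_def[abs_def] by simp
  qed
  have chinn: "0 \<le> chi n x" for n x unfolding chi_def by (intro mult_nonneg_nonneg sum_nonneg) auto
  have ind: "indicator (Xn \<alpha> n U) x \<le> chi n x" if n: "1 \<le> n" for n x
  proof (cases "x \<in> Xn \<alpha> n U")
    case False then show ?thesis using chinn by simp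
  next
    case True
    define g where "g m = \<phi> ((\<alpha> ^^ m) x)" for m
    define N where "N = Nf n"
    have "empirical \<alpha> x n \<in> U" using True by (simp add: Xn_def)
    then have "\<bar>(\<Sum>i<n. g i) / real n - \<mu> \<phi>\<bar> < \<eta>" unfolding U_def empirical_def g_def by simp
    then have "c0 < (\<Sum>i<n. g i) / real n" unfolding c0_def by linarith
    moreover have "0 < real n" using n by simp
    ultimately have sn: "real n * c0 < (\<Sum>i<n. g i)" by (simp add: less_divide_eq mult.commute[of "real n"])
    have Nk1: "N * k \<le> n" and Nk2: "n \<le> N * k + 2 * k" using nat_facts[OF k, of n] unfolding N_def Nf_def by auto
    have split: "(\<Sum>i<n. g i) = (\<Sum>i<N*k. g i) + (\<Sum>i\<in>{N*k..<n}. g i)"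
      using sum.atLeastLessThan_concat[of 0 "N*k" n g] Nk1 by (simp add: atLeast0LessThan)
    have tail: "(\<Sum>i\<in>{N*k..<n}. g i) \<le> real (n - N*k) * M"
      using sum_bounded_above[of "{N*k..<n}" g M] M unfolding g_def by (auto simp: abs_le_iff)
    have regr: "(\<Sum>r<k. E n r x) = (\<Sum>i<N*k. g i)"
      unfolding E_def g_def N_def[symmetric] by (rule regroup)
    have sumz: "(\<Sum>r<k. (E n r x - real N * c0)) = (\<Sum>i<N*k. g i) - real (N * k) * c0"
      using regr by (simp add: sum_subtractf)
    have "(\<Sum>r<k. (E n r x - real N * c0)) \<ge> real (n - N*k) * (c0 - M)"
    proof -
      have rn: "real n = real (n - N*k) + real (N*k)" using Nk1 by simp
      have "(\<Sum>r<k. (E n r x - real N * c0)) = (\<Sum>i<n. g i) - (\<Sum>i\<in>{N*k..<n}. g i) - real (N * k) * c0"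
        using sumz split by linarith
      also have "\<dots> \<ge> real n * c0 - real (n - N*k) * M - real (N * k) * c0" using sn tail by linarith
      finally have "(\<Sum>r<k. (E n r x - real N * c0)) \<ge> real n * c0 - real (n - N*k) * M - real (N * k) * c0" .
      moreover have "real n * c0 - real (n - N*k) * M - real (N * k) * c0 = real (n - N*k) * (c0 - M)"
        by (subst rn) (simp add: algebra_simps)
      ultimately show ?thesis by simp
    qed
    moreover have "real (n - N*k) * (c0 - M) \<ge> - (real k * W)"
    proof -
      have "real (n - N*k) \<le> 2 * real k" using Nk2 by linarith
      moreover have "- (\<bar>c0\<bar> + M) \<le> c0 - M" by linarith
      ultimately have "real (n - N*k) * (- (\<bar>c0\<bar> + M)) \<ge> 2 * real k * (- (\<bar>c0\<bar> + M))"
        using M0 by (intro mult_right_mono_neg) auto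
      moreover have "real (n - N*k) * (c0 - M) \<ge> real (n - N*k) * (- (\<bar>c0\<bar> + M))"
        using \<open>- (\<bar>c0\<bar> + M) \<le> c0 - M\<close> by (intro mult_left_mono) auto
      ultimately show ?thesis unfolding W_def by (simp add: algebra_simps)
    qed
    ultimately have tot: "(\<Sum>r<k. (E n r x - real N * c0)) \<ge> - (real k * W)" by linarith
    obtain r where r: "r < k" "E n r x - real N * c0 \<ge> - W"
    proof (rule ccontr)
      assume "\<not> thesis"
      then have "\<forall>r\<in>{..<k}. E n r x - real N * c0 < - W" using that by force
      then have "(\<Sum>r<k. (E n r x - real N * c0)) < (\<Sum>r<k. - W)"
        using k by (intro sum_strict_mono) (auto simp: lessThan_empty_iff)
      then show False using tot by simp
    qed
    have "exp (- W) \<le> exp (E n r x - real N * c0)" using r by simp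
    also have "\<dots> \<le> (\<Sum>r<k. exp (E n r x - real N * c0))"
      using r by (intro member_le_sum) auto
    finally have "exp W * exp (- W) \<le> chi n x" unfolding chi_def N_def by (simp add: mult_left_mono)
    then show ?thesis using True by (simp add: exp_minus)
  qed
  have bound: "supnorm ((A ^^ n) (chi n)) \<le> C * exp (real n * ((\<Lambda> - \<mu> \<phi> + \<eta>) / real k))"
    if n: "1 \<le> n" for n
  proof -
    define N where "N = Nf n"
    have Nk1: "N * k \<le> n" and Nk2: "n \<le> N * k + 2 * k" and Nk3: "1 \<le> N \<Longrightarrow> N * k + k \<le> n"
      using nat_facts[OF k, of n] unfolding N_def Nf_def by auto
    have termb: "(A ^^ n) (\<lambda>x. exp (E n r x - real N * c0)) y \<le> Q^2 * exp (real N * \<beta>)"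
      if r: "r < k" for r y
    proof (cases "N = 0")
      case True
      then have "(\<lambda>x. exp (E n r x - real N * c0)) = (\<lambda>x. 1)" unfolding E_def N_def by simp
      moreover have "n \<le> 2 * k" using Nk2 True by simp
      ultimately have "(A ^^ n) (\<lambda>x. exp (E n r x - real N * c0)) y \<le> Q" using QB by simp
      also have "Q \<le> Q^2" using Q1 by (simp add: power2_eq_square)
      finally show ?thesis using True by simp
    next
      case False
      define G where "G y = exp (\<Sum>i<N. \<phi> ((\<alpha> ^^ (i * k)) y))" for y
      have GB: "G \<in> CX" "\<And>x. (A ^^ (N * k)) G x \<le> exp (real N * \<Lambda>)"
        using G_bound[OF tr cont phi hyp, of N] unfolding G_def[abs_def] by auto
      have Gnn: "\<And>y. 0 \<le> G y" unfolding G_def by simp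
      have teq: "(\<lambda>x. exp (E n r x - real N * c0)) = (\<lambda>x. exp (- real N * c0) * (G ((\<alpha> ^^ r) x) * 1))"
      proof
        fix x
        have "E n r x = (\<Sum>i<N. \<phi> ((\<alpha> ^^ (i * k)) ((\<alpha> ^^ r) x)))"
          unfolding E_def N_def[symmetric]
        proof (intro sum.cong refl)
          fix i have e: "r + i * k = i * k + r" by simp
          show "\<phi> ((\<alpha> ^^ (r + i * k)) x) = \<phi> ((\<alpha> ^^ (i * k)) ((\<alpha> ^^ r) x))"
            by (simp only: e funpow_add comp_def)
        qed
        then show "exp (E n r x - real N * c0) = exp (- real N * c0) * (G ((\<alpha> ^^ r) x) * 1)"
          unfolding G_def by (simp add: exp_diff exp_minus field_simps)
      qed
      define sp where "sp = n - (N * k + r)"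
      have nsp: "n = sp + (N * k + r)" using Nk3 False r unfolding sp_def by simp
      have sp2: "sp \<le> 2 * k" using Nk2 unfolding sp_def by simp
      have r2: "r \<le> 2 * k" using r by simp
      have s1: "(A ^^ r) (\<lambda>x. G ((\<alpha> ^^ r) x) * 1) = (\<lambda>x. G x * (A ^^ r) (\<lambda>x. 1) x)"
        by (rule transfer_pow[OF tr cont GB(1) cx_const])
      have s1CX: "(\<lambda>x. G x * (A ^^ r) (\<lambda>x. 1) x) \<in> CX"
        unfolding s1[symmetric] by (rule op_cx[OF pP]) (simp add: cx_funpow[OF cont GB(1)])
      have s2: "(A ^^ (N * k)) (\<lambda>x. G x * (A ^^ r) (\<lambda>x. 1) x) z \<le> Q * exp (real N * \<Lambda>)" for z
      proof -
        have "(A ^^ (N * k)) (\<lambda>x. G x * (A ^^ r) (\<lambda>x. 1) x) z \<le> (A ^^ (N * k)) (\<lambda>x. Q * G x) z"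
          using QB[OF r2] Gnn by (intro op_mono[OF pP s1CX cx_cmult[OF GB(1)]]) (simp add: mult.commute[of Q] mult_left_mono)
        also have "\<dots> = Q * (A ^^ (N * k)) G z" using op_cmult[OF pP GB(1)] by simp
        also have "\<dots> \<le> Q * exp (real N * \<Lambda>)" using GB(2) Q1 by (intro mult_left_mono) auto
        finally show ?thesis .
      qed
      have s2CX: "(A ^^ (N * k)) (\<lambda>x. G x * (A ^^ r) (\<lambda>x. 1) x) \<in> CX" by (rule op_cx[OF pP s1CX])
      have s3: "(A ^^ sp) ((A ^^ (N * k)) (\<lambda>x. G x * (A ^^ r) (\<lambda>x. 1) x)) y \<le> Q * exp (real N * \<Lambda>) * Q"
      proof -
        have "(A ^^ sp) ((A ^^ (N * k)) (\<lambda>x. G x * (A ^^ r) (\<lambda>x. 1) x)) y \<le> Q * exp (real N * \<Lambda>) * (A ^^ sp) (\<lambda>x. 1) y"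
          by (rule op_le_const[OF pP s2CX s2])
        also have "\<dots> \<le> Q * exp (real N * \<Lambda>) * Q" using QB[OF sp2] Q1 by (intro mult_left_mono) auto
        finally show ?thesis .
      qed
      have GrCX: "(\<lambda>x. G ((\<alpha> ^^ r) x) * 1) \<in> CX" using cx_funpow[OF cont GB(1)] by simp
      have "(A ^^ n) (\<lambda>x. exp (E n r x - real N * c0)) y
          = exp (- real N * c0) * (A ^^ n) (\<lambda>x. G ((\<alpha> ^^ r) x) * 1) y"
        unfolding teq using op_cmult[OF pP GrCX] by simp
      also have "(A ^^ n) (\<lambda>x. G ((\<alpha> ^^ r) x) * 1) y = (A ^^ sp) ((A ^^ (N * k)) (\<lambda>x. G x * (A ^^ r) (\<lambda>x. 1) x)) y"
        by (subst nsp) (simp only: funpow_add comp_def s1)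
      finally have "(A ^^ n) (\<lambda>x. exp (E n r x - real N * c0)) y \<le> exp (- real N * c0) * (Q * exp (real N * \<Lambda>) * Q)"
        using s3 by (simp add: mult_left_mono)
      also have "\<dots> = Q^2 * exp (real N * \<beta>)"
        unfolding \<beta>_def by (simp add: power2_eq_square exp_add[symmetric] algebra_simps)
      finally show ?thesis .
    qed
    have termCX: "\<And>r. (\<lambda>x. exp (E n r x - real N * c0)) \<in> CX" using ECX unfolding N_def by (intro cx_exp) auto
    have Aeq: "(A ^^ n) (chi n) = (\<lambda>y. exp W * (\<Sum>r<k. (A ^^ n) (\<lambda>x. exp (E n r x - real N * c0)) y))"
    proof -
      have "(A ^^ n) (chi n) = (A ^^ n) (\<lambda>x. exp W * (\<Sum>r<k. exp (E n r x - real N * c0)))"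
        unfolding chi_def N_def by simp
      also have "\<dots> = (\<lambda>y. exp W * (A ^^ n) (\<lambda>x. \<Sum>r<k. exp (E n r x - real N * c0)) y)"
        by (rule op_cmult[OF pP cx_sum]) (use termCX in auto)
      also have "\<dots> = (\<lambda>y. exp W * (\<Sum>r<k. (A ^^ n) (\<lambda>x. exp (E n r x - real N * c0)) y))"
        using op_sum[OF pP finite_lessThan termCX] by simp
      finally show ?thesis .
    qed
    have Nreal: "real N * \<beta> \<le> 2 * \<bar>\<beta>\<bar> + real n * (\<beta> / real k)"
    proof -
      have kpos: "0 < real k" using k by simp
      have "real (N * k) \<le> real n" using Nk1 by (simp only: of_nat_le_iff)
      then have "real N * real k \<le> real n" by simp
      then have a1: "real N \<le> real n / real k" using kpos by (simp add: le_divide_eq)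
      have "real n \<le> real (N * k + 2 * k)" using Nk2 by (simp only: of_nat_le_iff)
      then have "real n \<le> real N * real k + 2 * real k" by simp
      then have a2: "real n / real k - 2 \<le> real N" using kpos by (simp add: divide_le_eq algebra_simps)
      have "\<bar>real N - real n / real k\<bar> \<le> 2" using a1 a2 by linarith
      then have "\<bar>\<beta> * (real N - real n / real k)\<bar> \<le> \<bar>\<beta>\<bar> * 2" by (simp add: abs_mult mult_left_mono)
      then have "\<beta> * (real N - real n / real k) \<le> 2 * \<bar>\<beta>\<bar>" by linarith
      then show ?thesis by (simp add: algebra_simps)
    qed
    have "\<forall>y. (A ^^ n) (chi n) y \<le> C * exp (real n * ((\<Lambda> - \<mu> \<phi> + \<eta>) / real k))"
    proof
      fix y
      have "(A ^^ n) (chi n) y \<le> exp W * (\<Sum>r<k. Q^2 * exp (real N * \<beta>))"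
      proof -
        have "(\<Sum>r<k. (A ^^ n) (\<lambda>x. exp (E n r x - real N * c0)) y) \<le> (\<Sum>r<k. Q^2 * exp (real N * \<beta>))"
          using termb by (intro sum_mono) auto
        then show ?thesis unfolding Aeq by (intro mult_left_mono) auto
      qed
      also have "\<dots> = exp W * real k * Q^2 * exp (real N * \<beta>)" by simp
      also have "\<dots> \<le> exp W * real k * Q^2 * exp (2 * \<bar>\<beta>\<bar> + real n * (\<beta> / real k))"
        using Nreal by (intro mult_left_mono) auto
      also have "\<dots> = C * exp (real n * ((\<Lambda> - \<mu> \<phi> + \<eta>) / real k))"
        unfolding C_def \<beta>_def c0_def by (simp add: exp_add)
      finally show "(A ^^ n) (chi n) y \<le> C * exp (real n * ((\<Lambda> - \<mu> \<phi> + \<eta>) / real k))" .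
    qed
    moreover have "\<forall>y. 0 \<le> (A ^^ n) (chi n) y" using op_pos[OF pP chiCX chinn] by blast
    ultimately show ?thesis by (intro supnorm_le) auto
  qed
  show ?thesis using nhd chiCX ind bound by blast
qed



lemma aux_abs: fixes a b c e t :: real
  assumes "\<bar>a - c\<bar> < t / 4" "\<bar>b - e\<bar> < t / 4" "t = \<bar>c - e\<bar>" shows "t / 2 < \<bar>a - b\<bar>"
  using assms unfolding abs_if by (auto split: if_splits)

lemma noninv:
  fixes \<alpha> :: "'a::topological_space \<Rightarrow> 'a" and \<mu> :: "('a \<Rightarrow> real) \<Rightarrow> real"
  assumes cpt: "compact (UNIV :: 'a set)" and tr: "transfer_operator \<alpha> A"
    and cont: "continuous_on UNIV \<alpha>" and mu: "\<mu> \<in> MX" and ninv: "\<not> invariant_functional \<alpha> \<mu>"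
    and eps: "0 < \<epsilon>"
  shows "\<exists>U C chi. weak_star_nhd \<mu> U \<and>
           (\<forall>n\<ge>1. chi n \<in> CX \<and> (\<forall>x. indicator (Xn \<alpha> n U) x \<le> chi n x)) \<and>
           (\<forall>n\<ge>1. supnorm ((A ^^ n) (chi n)) \<le> C * exp (real n * (- 1 / \<epsilon>)))"
proof -
  have pA: "pos_op A" by (rule transfer_pos_op[OF tr])
  have pP: "\<And>p. pos_op (A ^^ p)" using pos_op_funpow[OF pA] .
  obtain f where f: "f \<in> CX" "\<mu> (\<lambda>x. f (\<alpha> x)) \<noteq> \<mu> f"
    using ninv mu unfolding invariant_functional_def by blast
  define fa where "fa x = f (\<alpha> x)" for x
  have faCX: "fa \<in> CX" using cx_funpow[OF cont f(1), of 1] unfolding fa_def[abs_def] by simp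
  define d where "d = \<bar>\<mu> fa - \<mu> f\<bar>"
  have d: "0 < d" using f(2) unfolding d_def fa_def[abs_def] by simp
  obtain M where M: "\<And>x. \<bar>f x\<bar> \<le> M" using cx_bounded[OF cpt f(1)] by blast
  define U where "U = {\<nu>\<in>MX. \<forall>h\<in>{f, fa}. \<bar>\<nu> h - \<mu> h\<bar> < d / 4}"
  define N0 where "N0 = nat \<lceil>4 * M / d\<rceil> + 1"
  define chi where "chi n = (\<lambda>x::'a. if n < N0 then 1 else (0::real))" for n
  have "\<forall>p. \<exists>B. \<forall>x. \<bar>(A ^^ p) (\<lambda>x. 1) x\<bar> \<le> B"
    using cx_bounded[OF cpt op_cx[OF pP cx_const]] by blast
  then obtain Bf where Bf: "\<And>p x. \<bar>(A ^^ p) (\<lambda>x. 1) x\<bar> \<le> Bf p" by metis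
  have Bf0: "\<And>p. 0 \<le> Bf p" using Bf by (metis abs_ge_zero order_trans)
  define Q where "Q = 1 + (\<Sum>p<N0. Bf p)"
  have Q1: "1 \<le> Q" unfolding Q_def using Bf0 by (simp add: sum_nonneg)
  have QB: "\<And>p x. p < N0 \<Longrightarrow> (A ^^ p) (\<lambda>x. 1) x \<le> Q"
  proof -
    fix p x assume p: "p < N0"
    have "(A ^^ p) (\<lambda>x. 1) x \<le> Bf p" using Bf[of p x] by simp
    also have "Bf p \<le> (\<Sum>p<N0. Bf p)" using p Bf0 by (intro member_le_sum) auto
    finally show "(A ^^ p) (\<lambda>x. 1) x \<le> Q" unfolding Q_def by simp
  qed
  define C where "C = Q * exp (real N0 / \<epsilon>)"
  have nhd: "weak_star_nhd \<mu> U" unfolding weak_star_nhd_def U_def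
    using f(1) faCX d by (intro exI[of _ "{f, fa}"] exI[of _ "d/4"]) auto
  have chiCX: "chi n \<in> CX" for n unfolding chi_def by simp
  have ind: "indicator (Xn \<alpha> n U) x \<le> chi n x" if n: "1 \<le> n" for n x
  proof (cases "n < N0")
    case True then show ?thesis unfolding chi_def by (simp add: indicator_def)
  next
    case False
    have "x \<notin> Xn \<alpha> n U"
    proof
      assume "x \<in> Xn \<alpha> n U"
      then have e: "empirical \<alpha> x n \<in> U" by (simp add: Xn_def)
      define g where "g i = f ((\<alpha> ^^ i) x)" for i
      have ef: "empirical \<alpha> x n f = (\<Sum>i<n. g i) / real n" unfolding empirical_def g_def by simp
      have efa: "empirical \<alpha> x n fa = (\<Sum>i<n. g (Suc i)) / real n" unfolding empirical_def g_def fa_def by simp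
      have "empirical \<alpha> x n fa - empirical \<alpha> x n f = (g n - g 0) / real n"
        unfolding ef efa using sum_lessThan_telescope[of g n] by (simp add: diff_divide_distrib[symmetric] sum_subtractf)
      moreover have "\<bar>g n - g 0\<bar> \<le> 2 * M" using M[of "(\<alpha> ^^ n) x"] M[of x] unfolding g_def by simp
      ultimately have up: "\<bar>empirical \<alpha> x n fa - empirical \<alpha> x n f\<bar> \<le> 2 * M / real n"
        using n by (simp add: abs_divide divide_right_mono)
      have "\<bar>empirical \<alpha> x n fa - \<mu> fa\<bar> < d/4" "\<bar>empirical \<alpha> x n f - \<mu> f\<bar> < d/4" using e unfolding U_def by auto
      then have "d / 2 < \<bar>empirical \<alpha> x n fa - empirical \<alpha> x n f\<bar>" by (intro aux_abs) (auto simp: d_def)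
      then have "d / 2 < 2 * M / real n" using up by linarith
      then have "d * real n < 4 * M" using n by (simp add: less_divide_eq field_simps)
      moreover have "4 * M / d < real n"
      proof -
        have "4 * M / d \<le> real (nat \<lceil>4 * M / d\<rceil>)" by linarith
        also have "\<dots> < real N0" unfolding N0_def by simp
        also have "\<dots> \<le> real n" using False by simp
        finally show ?thesis .
      qed
      then have "4 * M < real n * d" using d by (simp add: divide_less_eq)
      ultimately show False by (simp add: mult.commute)
    qed
    then show ?thesis unfolding chi_def by simp
  qed
  have bound: "supnorm ((A ^^ n) (chi n)) \<le> C * exp (real n * (- 1 / \<epsilon>))" if n: "1 \<le> n" for n
  proof (cases "n < N0")
    case True
    have "\<And>x. (A ^^ n) (chi n) x \<le> Q" unfolding chi_def using True QB by simp
    moreover have "\<And>x. 0 \<le> (A ^^ n) (chi n) x" using op_pos[OF pP chiCX] unfolding chi_def by simp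
    moreover have "Q \<le> C * exp (real n * (- 1 / \<epsilon>))"
    proof -
      have "C * exp (real n * (- 1 / \<epsilon>)) = Q * exp ((real N0 - real n) / \<epsilon>)"
        unfolding C_def by (simp add: exp_add[symmetric] diff_divide_distrib)
      moreover have "1 \<le> exp ((real N0 - real n) / \<epsilon>)" using True eps by simp
      ultimately show ?thesis using Q1 by simp
    qed
    ultimately show ?thesis by (meson supnorm_le order_trans)
  next
    case False
    have "(A ^^ n) (chi n) = (\<lambda>x. 0)" unfolding chi_def using False op_cmult1[OF pP[of n], of 0] by simp
    then have "supnorm ((A ^^ n) (chi n)) \<le> 0" by (intro supnorm_le) auto
    moreover have "0 \<le> C * exp (real n * (- 1 / \<epsilon>))" unfolding C_def using Q1 by simp
    ultimately show ?thesis by linarith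
  qed
  show ?thesis using nhd chiCX ind bound by blast
qed



lemma te_fin:
  fixes \<alpha> :: "'a::topological_space \<Rightarrow> 'a" and \<mu> :: "('a \<Rightarrow> real) \<Rightarrow> real"
  assumes cpt: "compact (UNIV :: 'a set)" and tr: "transfer_operator \<alpha> A"
    and inv: "invariant_functional \<alpha> \<mu>"
  shows "t_entropy \<alpha> A \<mu> \<noteq> \<infinity>"
proof -
  have mu: "\<mu> \<in> MX" using inv by (simp add: invariant_functional_def)
  have pf: "prob_functional \<mu>" using mu by (simp add: MX_def)
  have pA: "pos_op A" by (rule transfer_pos_op[OF tr])
  obtain B where B: "\<And>x. \<bar>A (\<lambda>x. 1) x\<bar> \<le> B" using cx_bounded[OF cpt op_cx[OF pA cx_const]] by blast
  have D1: "partition_of_unity {\<lambda>x::'a. 1::real}" unfolding partition_of_unity_def by simp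
  have "tau_n A \<mu> 1 {\<lambda>x. 1} \<le> ereal B"
    unfolding tau_n_def
  proof (rule SUP_least)
    fix m :: "('a \<Rightarrow> real) \<Rightarrow> real" assume m: "m \<in> MX"
    have pm: "prob_functional m" using m by (simp add: MX_def)
    have "m (A (\<lambda>x. 1)) \<le> m (\<lambda>x. B)"
      using B by (intro pf_mono[OF pm op_cx[OF pA cx_const] cx_const]) (simp add: abs_le_iff)
    then have bB: "m (A (\<lambda>x. 1)) \<le> B" using pf_const[OF pm, of B] by simp
    have b0: "0 \<le> m (A (\<lambda>x. 1))" using pf_pos[OF pm op_cx[OF pA cx_const]] op_pos[OF pA cx_const] by simp
    have "tau_summand 1 (m (A (\<lambda>x. 1))) \<le> ereal B"
    proof (cases "m (A (\<lambda>x. 1)) = 0")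
      case True then show ?thesis by (simp add: tau_summand_def)
    next
      case False
      then have "ln (m (A (\<lambda>x. 1))) \<le> m (A (\<lambda>x. 1)) - 1" using b0 by (intro ln_le_minus_one) auto
      then show ?thesis using False bB by (simp add: tau_summand_def)
    qed
    then show "(\<Sum>g\<in>{\<lambda>x. 1}. tau_summand (\<mu> g) (m ((A ^^ 1) g))) \<le> ereal B"
      using pf_one[OF pf] by simp
  qed
  moreover have "t_entropy \<alpha> A \<mu> \<le> tau_n A \<mu> 1 {\<lambda>x. 1} / ereal (real 1)"
    unfolding t_entropy_def using inv D1
    by (auto intro!: INF_lower2[of 1] INF_lower)
  moreover have "tau_n A \<mu> 1 {\<lambda>x. 1} / ereal (real 1) = tau_n A \<mu> 1 {\<lambda>x. 1}" by (simp add: one_ereal_def[symmetric])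
  ultimately have "t_entropy \<alpha> A \<mu> \<le> ereal B" by (metis order_trans)
  then show ?thesis by auto
qed



theorem theorem2p1:
  fixes \<alpha> :: "'a::t2_space \<Rightarrow> 'a"
    and A :: "('a \<Rightarrow> real) \<Rightarrow> ('a \<Rightarrow> real)"
  assumes "compact (UNIV :: 'a set)"
    and "continuous_on UNIV \<alpha>"
    and "transfer_operator \<alpha> A"
  shows "\<forall>\<mu>\<in>MX. \<forall>\<epsilon>>0. \<exists>U C chi.
           weak_star_nhd \<mu> U \<and>
           (\<forall>n\<ge>1. chi n \<in> CX \<and> (\<forall>x. indicator (Xn \<alpha> n U) x \<le> chi n x)) \<and>
           (\<forall>n\<ge>1. supnorm ((A ^^ n) (chi n)) \<le>
              C * exp (real n * (if t_entropy \<alpha> A \<mu> = -\<infinity> then - 1 / \<epsilon>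
                                 else real_of_ereal (t_entropy \<alpha> A \<mu>) + \<epsilon>)))"
proof (intro ballI allI impI)
  fix \<mu> :: "('a \<Rightarrow> real) \<Rightarrow> real" and \<epsilon> :: real
  assume mu: "\<mu> \<in> MX" and eps: "0 < \<epsilon>"
  note cpt = assms(1) and cont = assms(2) and tr = assms(3)
  show "\<exists>U C chi.
           weak_star_nhd \<mu> U \<and>
           (\<forall>n\<ge>1. chi n \<in> CX \<and> (\<forall>x. indicator (Xn \<alpha> n U) x \<le> chi n x)) \<and>
           (\<forall>n\<ge>1. supnorm ((A ^^ n) (chi n)) \<le>
              C * exp (real n * (if t_entropy \<alpha> A \<mu> = -\<infinity> then - 1 / \<epsilon>
                                 else real_of_ereal (t_entropy \<alpha> A \<mu>) + \<epsilon>)))"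
  proof (cases "invariant_functional \<alpha> \<mu>")
    case False
    then have "t_entropy \<alpha> A \<mu> = -\<infinity>" by (simp add: t_entropy_def)
    then show ?thesis using noninv[OF cpt tr cont mu False eps] by simp
  next
    case True
    define te where "te = t_entropy \<alpha> A \<mu>"
    define target where "target = (if te = -\<infinity> then - 1 / \<epsilon> else real_of_ereal te + \<epsilon>)"
    define T where "T = target - \<epsilon> / 2"
    have fin: "te \<noteq> \<infinity>" unfolding te_def by (rule te_fin[OF cpt tr True])
    have teT: "te < ereal T"
    proof (cases "te = -\<infinity>")
      case True then show ?thesis by simp
    next
      case False
      then obtain r where "te = ereal r" using fin by (cases te) auto
      then show ?thesis unfolding T_def target_def using eps by simp
    qed
    have "te = (INF n\<in>{1..}. INF D\<in>{D. partition_of_unity D}. tau_n A \<mu> n D / ereal (real n))"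
      unfolding te_def t_entropy_def using True by simp
    then obtain n D where n: "n \<in> {1..}" and D: "partition_of_unity D"
      and lt: "tau_n A \<mu> n D / ereal (real n) < ereal T"
      using teT by (auto simp: INF_less_iff)
    have n1: "1 \<le> n" using n by simp
    have "tau_n A \<mu> n D < ereal T * ereal (real n)"
      using lt n1 by (subst ereal_divide_less_iff[symmetric]) auto
    then have "tau_n A \<mu> n D < ereal (real n * T)" by (simp add: mult.commute)
    from key_lemma[OF cpt tr mu D this] obtain \<phi> where phi: "\<phi> \<in> CX"
      and hyp: "\<forall>x. (A ^^ n) (\<lambda>x. exp (\<phi> x)) x \<le> exp (real n * T + \<mu> \<phi>)" by blast
    have eta: "0 < real n * \<epsilon> / 2" using n1 eps by simp
    from tilt[OF cpt tr cont mu phi n1 hyp eta] obtain U C chi where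
      res: "weak_star_nhd \<mu> U" "\<forall>n\<ge>1. chi n \<in> CX \<and> (\<forall>x. indicator (Xn \<alpha> n U) x \<le> chi n x)"
        "\<forall>m\<ge>1. supnorm ((A ^^ m) (chi m)) \<le> C * exp (real m * ((real n * T + \<mu> \<phi> - \<mu> \<phi> + real n * \<epsilon> / 2) / real n))"
      by blast
    have "(real n * T + \<mu> \<phi> - \<mu> \<phi> + real n * \<epsilon> / 2) / real n = target"
      using n1 unfolding T_def by (simp add: field_simps)
    then have "\<forall>m\<ge>1. supnorm ((A ^^ m) (chi m)) \<le> C * exp (real m * target)" using res(3) by simp
    then show ?thesis using res(1,2) unfolding target_def te_def by blast
  qed
qed

end
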